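(* Normal form bisimilarity is included in contextual equivalence: for all terms $t_0,t_1$ of $\lambda_{\mathcal S}$, if $t_0 \sim t_1$ then $t_0 \simeq_{\mathrm{ctx}} t_1$.
   Context: The calculus $\lambda_{\mathcal S}$ (call-by-value $\lambda$-calculus with shift and reset). Terms: $t ::= x \mid \lambda x.t \mid t\,t \mid \mathcal{S}k.t \mid \langle t\rangle$; values: $v ::= \lambda x.t \mid x$. $\lambda x.t$ binds $x$ in $t$ and $\mathcal{S}k.t$ binds $k$ in $t$; terms are identified up to $\alpha$-conversion; $\mathrm{fv}(t)$ is the set of free variables; $t\{v/x\}$ is capture-avoiding substitution. Pure contexts: $F ::= [\,] \mid v\,F \mid F\,t$. Evaluation contexts: $E ::= [\,] \mid v\,E \mid E\,t \mid \langle E\rangle$. General contexts: $C ::= [\,] \mid \lambda x.C \mid t\,C \mid C\,t \mid \mathcal{S}k.C \mid \langle C\rangle$; $C[t]$ is hole-filling (free variables of $t$ may be captured). Reduction $\to$: $E[(\lambda x.t)\,v] \to E[t\{v/x\}]$; $E[\langle F[\mathcal{S}k.t]\rangle] \to E[\langle t\{\lambda x.\langle F[x]\rangle/k\}\rangle]$ with $x\notin\mathrm{fv}(F)$; $E[\langle v\rangle]\to E[v]$. $\to^*$ is the reflexive-transitive closure, and $t \Downarrow t'$ means $t\to^* t'$ and $t'$ is irreducible. A term is stuck if it is not a value and is irreducible; a normal form is a value or a stuck term. Control stuck terms are those of the form $F[\mathcal{S}k.t]$; open stuck terms are those of the form $E[x\,v]$. A variable is fresh if it does not occur free in the terms/contexts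 under consideration. Contextual equivalence: $t_0 \simeq_{\mathrm{ctx}} t_1$ iff for every context $C$ such that $C[t_0]$ and $C[t_1]$ are closed, (i) $C[t_0]\Downarrow v_0$ for a value $v_0$ implies $C[t_1]\Downarrow v_1$ for some value $v_1$; (ii) $C[t_0]\Downarrow t_0'$ with $t_0'$ control stuck implies $C[t_1]\Downarrow t_1'$ with $t_1'$ control stuck; and symmetrically with $t_0,t_1$ exchanged. Normal form bisimilarity. Given a relation $\mathcal R$ on terms, extend it to evaluation contexts: $E_0 \mathrel{\mathcal R} E_1$ iff either $E_0 = E_0'[\langle F_0\rangle]$, $E_1 = E_1'[\langle F_1\rangle]$ with $F_0,F_1$ pure, $E_0'[x]\mathrel{\mathcal R}E_1'[x]$ and $\langle F_0[x]\rangle \mathrel{\mathcal R}\langle F_1[x]\rangle$ for a fresh $x$; or $E_0=F_0$, $E_1=F_1$ are pure and $F_0[x]\mathrel{\mathcal R}F_1[x]$ for a fresh $x$. Define $v\mathbin{@}y$ as $x\,y$ if $v=x$ and as $t\{y/x\}$ if $v=\lambda x.t$. Define $\mathcal R^{\mathrm{nf}}$ on normal forms inductively: $v_0 \mathrel{\mathcal R^{\mathrm{nf}}} v_1$ if $v_0\mathbin{@}x \mathrel{\mathcal R} v_1\mathbin{@}x$ for a fresh $x$; $F_0[\mathcal{S}k.t_0] \mathrel{\mathcal R^{\mathrm{nf}}} F_1[\mathcal{S}k.t_1]$ if $F_0\mathrel{\mathcal R}F_1$ and $\langle t_0\rangle\mathrel{\mathcal R}\langle t_1\rangle$; $E_0[x\,v_0]\mathrel{\mathcal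 R^{\mathrm{nf}}}E_1[x\,v_1]$ if $E_0\mathrel{\mathcal R}E_1$ and $v_0\mathrel{\mathcal R^{\mathrm{nf}}}v_1$. $\mathcal R$ is a normal form simulation if $t_0\mathrel{\mathcal R}t_1$ and $t_0\Downarrow t_0'$ imply $t_1\Downarrow t_1'$ for some $t_1'$ with $t_0'\mathrel{\mathcal R^{\mathrm{nf}}}t_1'$; it is a normal form bisimulation if both $\mathcal R$ and its inverse are normal form simulations. Normal form bisimilarity $\sim$ is the largest normal form bisimulation. *)

theory Defs
  imports Main
begin

text \<open>Locally nameless representation of the terms of lambda_S:
  bound variables are de Bruijn indices, free variables are names (nat).
  Locally closed terms correspond exactly to terms modulo alpha-conversion.\<close>

type_synonym var = nat

datatype trm = BV nat | FV var | Lam trm | App trm trm | Shift trm | Reset trm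

fun lc_at :: "nat \<Rightarrow> trm \<Rightarrow> bool" where
  "lc_at k (BV i) = (i < k)"
| "lc_at k (FV x) = True"
| "lc_at k (Lam t) = lc_at (Suc k) t"
| "lc_at k (App t u) = (lc_at k t \<and> lc_at k u)"
| "lc_at k (Shift t) = lc_at (Suc k) t"
| "lc_at k (Reset t) = lc_at k t"

abbreviation lc :: "trm \<Rightarrow> bool" where "lc t \<equiv> lc_at 0 t"

fun fv :: "trm \<Rightarrow> var set" where
  "fv (BV i) = {}"
| "fv (FV x) = {x}"
| "fv (Lam t) = fv t"
| "fv (App t u) = fv t \<union> fv u"
| "fv (Shift t) = fv t"
| "fv (Reset t) = fv t"

fun open_at :: "nat \<Rightarrow> trm \<Rightarrow> trm \<Rightarrow> trm" where
  "open_at k u (BV i) = (if i = k then u else BV i)"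
| "open_at k u (FV x) = FV x"
| "open_at k u (Lam t) = Lam (open_at (Suc k) u t)"
| "open_at k u (App t s) = App (open_at k u t) (open_at k u s)"
| "open_at k u (Shift t) = Shift (open_at (Suc k) u t)"
| "open_at k u (Reset t) = Reset (open_at k u t)"

abbreviation opn :: "trm \<Rightarrow> trm \<Rightarrow> trm" where "opn b u \<equiv> open_at 0 u b"

fun close_at :: "nat \<Rightarrow> var \<Rightarrow> trm \<Rightarrow> trm" where
  "close_at k x (BV i) = BV i"
| "close_at k x (FV y) = (if y = x then BV k else FV y)"
| "close_at k x (Lam t) = Lam (close_at (Suc k) x t)"
| "close_at k x (App t s) = App (close_at k x t) (close_at k x s)"
| "close_at k x (Shift t) = Shift (close_at (Suc k) x t)"
| "close_at k x (Reset t) = Reset (close_at k x t)"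

definition lam :: "var \<Rightarrow> trm \<Rightarrow> trm" where "lam x t = Lam (close_at 0 x t)"
definition shift :: "var \<Rightarrow> trm \<Rightarrow> trm" where "shift k t = Shift (close_at 0 k t)"

fun is_val :: "trm \<Rightarrow> bool" where
  "is_val (Lam t) = True"
| "is_val (FV x) = True"
| "is_val _ = False"

datatype ectx = Hole | ApR trm ectx | ApL ectx trm | Rst ectx

fun plugE :: "ectx \<Rightarrow> trm \<Rightarrow> trm" where
  "plugE Hole t = t"
| "plugE (ApR v E) t = App v (plugE E t)"
| "plugE (ApL E s) t = App (plugE E t) s"
| "plugE (Rst E) t = Reset (plugE E t)"

fun compE :: "ectx \<Rightarrow> ectx \<Rightarrow> ectx" where
  "compE Hole E' = E'"
| "compE (ApR v E) E' = ApR v (compE E E')"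
| "compE (ApL E s) E' = ApL (compE E E') s"
| "compE (Rst E) E' = Rst (compE E E')"

fun fvE :: "ectx \<Rightarrow> var set" where
  "fvE Hole = {}"
| "fvE (ApR v E) = fv v \<union> fvE E"
| "fvE (ApL E s) = fvE E \<union> fv s"
| "fvE (Rst E) = fvE E"

fun evctx :: "ectx \<Rightarrow> bool" where
  "evctx Hole = True"
| "evctx (ApR v E) = (is_val v \<and> lc v \<and> evctx E)"
| "evctx (ApL E s) = (evctx E \<and> lc s)"
| "evctx (Rst E) = evctx E"

fun pure :: "ectx \<Rightarrow> bool" where
  "pure Hole = True"
| "pure (ApR v E) = (is_val v \<and> lc v \<and> pure E)"
| "pure (ApL E s) = (pure E \<and> lc s)"
| "pure (Rst E) = False"

text \<open>General contexts; hole filling may capture free variables (named binders).\<close>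
datatype gctx = CHole | CLam var gctx | CAppL gctx trm | CAppR trm gctx
  | CShift var gctx | CReset gctx

fun plugC :: "gctx \<Rightarrow> trm \<Rightarrow> trm" where
  "plugC CHole t = t"
| "plugC (CLam x C) t = lam x (plugC C t)"
| "plugC (CAppL C s) t = App (plugC C t) s"
| "plugC (CAppR s C) t = App s (plugC C t)"
| "plugC (CShift k C) t = shift k (plugC C t)"
| "plugC (CReset C) t = Reset (plugC C t)"

fun wf_ctx :: "gctx \<Rightarrow> bool" where
  "wf_ctx CHole = True"
| "wf_ctx (CLam x C) = wf_ctx C"
| "wf_ctx (CAppL C s) = (wf_ctx C \<and> lc s)"
| "wf_ctx (CAppR s C) = (lc s \<and> wf_ctx C)"
| "wf_ctx (CShift k C) = wf_ctx C"
| "wf_ctx (CReset C) = wf_ctx C"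

inductive red :: "trm \<Rightarrow> trm \<Rightarrow> bool" where
  beta: "\<lbrakk>evctx E; is_val v; lc (plugE E (App (Lam b) v))\<rbrakk>
     \<Longrightarrow> red (plugE E (App (Lam b) v)) (plugE E (opn b v))"
| shift: "\<lbrakk>evctx E; pure F; x \<notin> fvE F; lc (plugE E (Reset (plugE F (Shift b))))\<rbrakk>
     \<Longrightarrow> red (plugE E (Reset (plugE F (Shift b))))
             (plugE E (Reset (opn b (lam x (Reset (plugE F (FV x)))))))"
| reset: "\<lbrakk>evctx E; is_val v; lc (plugE E (Reset v))\<rbrakk>
     \<Longrightarrow> red (plugE E (Reset v)) (plugE E v)"

definition irreducible :: "trm \<Rightarrow> bool" where
  "irreducible t \<longleftrightarrow> \<not> (\<exists>t'. red t t')"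

definition eval :: "trm \<Rightarrow> trm \<Rightarrow> bool" where
  "eval t t' \<longleftrightarrow> red\<^sup>*\<^sup>* t t' \<and> irreducible t'"

definition control_stuck :: "trm \<Rightarrow> bool" where
  "control_stuck t \<longleftrightarrow> (\<exists>F b. pure F \<and> t = plugE F (Shift b))"

definition ctx_equiv :: "trm \<Rightarrow> trm \<Rightarrow> bool" where
  "ctx_equiv t0 t1 \<longleftrightarrow>
    (\<forall>C. wf_ctx C \<and> fv (plugC C t0) = {} \<and> fv (plugC C t1) = {} \<longrightarrow>
      ((\<exists>v0. eval (plugC C t0) v0 \<and> is_val v0) \<longrightarrow> (\<exists>v1. eval (plugC C t1) v1 \<and> is_val v1)) \<and>
      ((\<exists>u0. eval (plugC C t0) u0 \<and> control_stuck u0) \<longrightarrow> (\<exists>u1. eval (plugC C t1) u1 \<and> control_stuck u1)) \<and>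
      ((\<exists>v1. eval (plugC C t1) v1 \<and> is_val v1) \<longrightarrow> (\<exists>v0. eval (plugC C t0) v0 \<and> is_val v0)) \<and>
      ((\<exists>u1. eval (plugC C t1) u1 \<and> control_stuck u1) \<longrightarrow> (\<exists>u0. eval (plugC C t0) u0 \<and> control_stuck u0)))"

definition ctx_rel :: "(trm \<Rightarrow> trm \<Rightarrow> bool) \<Rightarrow> ectx \<Rightarrow> ectx \<Rightarrow> bool" where
  "ctx_rel R E0 E1 \<longleftrightarrow>
    (\<exists>E0' F0 E1' F1 x. E0 = compE E0' (Rst F0) \<and> E1 = compE E1' (Rst F1) \<and>
        pure F0 \<and> pure F1 \<and> x \<notin> fvE E0 \<union> fvE E1 \<and>
        R (plugE E0' (FV x)) (plugE E1' (FV x)) \<and>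
        R (Reset (plugE F0 (FV x))) (Reset (plugE F1 (FV x))))
    \<or> (pure E0 \<and> pure E1 \<and>
        (\<exists>x. x \<notin> fvE E0 \<union> fvE E1 \<and> R (plugE E0 (FV x)) (plugE E1 (FV x))))"

fun app_at :: "trm \<Rightarrow> var \<Rightarrow> trm" where
  "app_at (FV x) y = App (FV x) (FV y)"
| "app_at (Lam b) y = opn b (FV y)"
| "app_at t y = App t (FV y)"

definition val_rel :: "(trm \<Rightarrow> trm \<Rightarrow> bool) \<Rightarrow> trm \<Rightarrow> trm \<Rightarrow> bool" where
  "val_rel R v0 v1 \<longleftrightarrow> is_val v0 \<and> is_val v1 \<and>
     (\<exists>x. x \<notin> fv v0 \<union> fv v1 \<and> R (app_at v0 x) (app_at v1 x))"

definition nf_rel :: "(trm \<Rightarrow> trm \<Rightarrow> bool) \<Rightarrow> trm \<Rightarrow> trm \<Rightarrow> bool" where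
  "nf_rel R t0 t1 \<longleftrightarrow>
     val_rel R t0 t1
   \<or> (\<exists>F0 F1 b0 b1 k. pure F0 \<and> pure F1 \<and>
        t0 = plugE F0 (Shift b0) \<and> t1 = plugE F1 (Shift b1) \<and>
        ctx_rel R F0 F1 \<and> k \<notin> fv t0 \<union> fv t1 \<and>
        R (Reset (opn b0 (FV k))) (Reset (opn b1 (FV k))))
   \<or> (\<exists>E0 E1 x v0 v1. evctx E0 \<and> evctx E1 \<and>
        t0 = plugE E0 (App (FV x) v0) \<and> t1 = plugE E1 (App (FV x) v1) \<and>
        ctx_rel R E0 E1 \<and> val_rel R v0 v1)"

definition nf_sim :: "(trm \<Rightarrow> trm \<Rightarrow> bool) \<Rightarrow> bool" where
  "nf_sim R \<longleftrightarrow> (\<forall>t0 t1 t0'. R t0 t1 \<and> eval t0 t0' \<longrightarrow>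
      (\<exists>t1'. eval t1 t1' \<and> nf_rel R t0' t1'))"

definition nf_bisim :: "(trm \<Rightarrow> trm \<Rightarrow> bool) \<Rightarrow> bool" where
  "nf_bisim R \<longleftrightarrow> (\<forall>t0 t1. R t0 t1 \<longrightarrow> lc t0 \<and> lc t1) \<and>
      nf_sim R \<and> nf_sim (\<lambda>t1 t0. R t0 t1)"

definition nf_bisimilar :: "trm \<Rightarrow> trm \<Rightarrow> bool" where
  "nf_bisimilar t0 t1 \<longleftrightarrow> (\<exists>R. nf_bisim R \<and> R t0 t1)"

end

theory Submission
  imports Defs
begin

fun msubst :: "(var \<Rightarrow> trm) \<Rightarrow> trm \<Rightarrow> trm" where
  "msubst s (BV i) = BV i"
| "msubst s (FV x) = s x"
| "msubst s (Lam t) = Lam (msubst s t)"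
| "msubst s (App t u) = App (msubst s t) (msubst s u)"
| "msubst s (Shift t) = Shift (msubst s t)"
| "msubst s (Reset t) = Reset (msubst s t)"

fun msubstE :: "(var \<Rightarrow> trm) \<Rightarrow> ectx \<Rightarrow> ectx" where
  "msubstE s Hole = Hole"
| "msubstE s (ApR v E) = ApR (msubst s v) (msubstE s E)"
| "msubstE s (ApL E t) = ApL (msubstE s E) (msubst s t)"
| "msubstE s (Rst E) = Rst (msubstE s E)"

definition good :: "(var \<Rightarrow> trm) \<Rightarrow> bool" where
  "good s \<longleftrightarrow> (\<forall>x. lc (s x) \<and> is_val (s x))"

lemma lc_at_mono: "lc_at k t \<Longrightarrow> k \<le> k' \<Longrightarrow> lc_at k' t"
  by (induction t arbitrary: k k') auto

lemma open_lc: "lc_at k t \<Longrightarrow> k \<le> j \<Longrightarrow> open_at j u t = t"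
  by (induction t arbitrary: k j) auto

lemma open_lc0[simp]: "lc t \<Longrightarrow> open_at j u t = t"
  using open_lc by blast

lemma lc_open: "lc_at (Suc k) t \<Longrightarrow> lc u \<Longrightarrow> lc_at k (open_at k u t)"
  by (induction t arbitrary: k) (auto intro: lc_at_mono)

lemma fv_open: "fv (open_at k u t) \<subseteq> fv t \<union> fv u"
  by (induction t arbitrary: k) auto

lemma fv_open2: "fv t \<subseteq> fv (open_at k u t)"
  by (induction t arbitrary: k) auto

lemma size_open_FV[simp]: "size (open_at k (FV x) t) = size t"
  by (induction t arbitrary: k) auto

lemma msubst_lc: "lc_at k t \<Longrightarrow> good s \<Longrightarrow> lc_at k (msubst s t)"
  by (induction t arbitrary: k) (auto simp: good_def intro: lc_at_mono)

lemma msubst_open: "good s \<Longrightarrow> msubst s (open_at k u t) = open_at k (msubst s u) (msubst s t)"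
  by (induction t arbitrary: k) (auto simp: good_def open_lc)

lemma msubst_cong: "(\<And>x. x \<in> fv t \<Longrightarrow> s x = s' x) \<Longrightarrow> msubst s t = msubst s' t"
  by (induction t) auto

lemma msubstE_cong: "(\<And>x. x \<in> fvE E \<Longrightarrow> s x = s' x) \<Longrightarrow> msubstE s E = msubstE s' E"
  by (induction E) (auto intro: msubst_cong)

lemma msubst_id[simp]: "msubst FV t = t"
  by (induction t) auto

lemma fv_msubst: "fv (msubst s t) = (\<Union>x\<in>fv t. fv (s x))"
  by (induction t) auto

lemma msubst_closed: "(\<And>x. x \<in> fv t \<Longrightarrow> fv (s x) = {}) \<Longrightarrow> fv (msubst s t) = {}"
  by (simp add: fv_msubst)

lemma fvE_msubstE: "fvE (msubstE s E) = (\<Union>x\<in>fvE E. fv (s x))"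
  by (induction E) (auto simp: fv_msubst)

lemma open_msubst_close:
  "lc_at k t \<Longrightarrow> (\<And>x. lc (s x)) \<Longrightarrow> lc u \<Longrightarrow>
   open_at k u (msubst s (close_at k x t)) = msubst (s(x:=u)) t"
  by (induction t arbitrary: k) (auto simp: open_lc)

lemma open_msubst_fresh:
  "y \<notin> fv b \<Longrightarrow> (\<And>x. lc (s x)) \<Longrightarrow>
   open_at k u (msubst s b) = msubst (s(y:=u)) (open_at k (FV y) b)"
  by (induction b arbitrary: k) (auto simp: open_lc)

lemma close_open: "x \<notin> fv b \<Longrightarrow> close_at k x (open_at k (FV x) b) = b"
  by (induction b arbitrary: k) auto

lemma lc_close: "lc_at k t \<Longrightarrow> lc_at (Suc k) (close_at k x t)"
  by (induction t arbitrary: k) auto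

lemma fv_close: "fv (close_at k x t) = fv t - {x}"
  by (induction t arbitrary: k) auto

lemma plugE_compE: "plugE (compE E E') t = plugE E (plugE E' t)"
  by (induction E) auto

lemma msubst_plugE: "msubst s (plugE E t) = plugE (msubstE s E) (msubst s t)"
  by (induction E) auto

lemma fv_plugE: "fv (plugE E t) = fvE E \<union> fv t"
  by (induction E) auto

lemma lc_plugE: "lc_at k (plugE E t) \<longleftrightarrow> lc_at k (plugE E (FV x)) \<and> lc_at k t"
  by (induction E) auto

lemma is_val_msubst: "is_val v \<Longrightarrow> good s \<Longrightarrow> is_val (msubst s v)"
  by (cases v) (auto simp: good_def)

lemma pure_msubstE: "pure F \<Longrightarrow> good s \<Longrightarrow> pure (msubstE s F)"
  by (induction F) (auto simp: is_val_msubst msubst_lc)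

lemma evctx_msubstE: "evctx F \<Longrightarrow> good s \<Longrightarrow> evctx (msubstE s F)"
  by (induction F) (auto simp: is_val_msubst msubst_lc)

lemma pure_evctx: "pure F \<Longrightarrow> evctx F"
  by (induction F) auto

lemma evctx_compE[simp]: "evctx (compE E E') \<longleftrightarrow> evctx E \<and> evctx E'"
  by (induction E) auto

lemma pure_compE[simp]: "pure (compE E E') \<longleftrightarrow> pure E \<and> pure E'"
  by (induction E) auto

lemma fvE_compE[simp]: "fvE (compE E E') = fvE E \<union> fvE E'"
  by (induction E) auto

lemma msubstE_compE: "msubstE s (compE E E') = compE (msubstE s E) (msubstE s E')"
  by (induction E) auto


inductive rd :: "trm \<Rightarrow> trm \<Rightarrow> bool" where
  rbeta: "lc (Lam b) \<Longrightarrow> is_val v \<Longrightarrow> lc v \<Longrightarrow> rd (App (Lam b) v) (opn b v)"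
| rreset: "is_val v \<Longrightarrow> lc v \<Longrightarrow> rd (Reset v) v"
| rshift: "pure F \<Longrightarrow> lc (plugE F (Shift b)) \<Longrightarrow>
    rd (Reset (plugE F (Shift b))) (Reset (opn b (Lam (Reset (plugE F (BV 0))))))"
| rappL: "rd t t' \<Longrightarrow> lc u \<Longrightarrow> rd (App t u) (App t' u)"
| rappR: "is_val v \<Longrightarrow> lc v \<Longrightarrow> rd t t' \<Longrightarrow> rd (App v t) (App v t')"
| rrst: "rd t t' \<Longrightarrow> rd (Reset t) (Reset t')"

lemma finite_fv[simp]: "finite (fv t)"
  by (induction t) auto

lemma finite_fvE[simp]: "finite (fvE E)"
  by (induction E) auto

lemma close_fresh: "x \<notin> fv t \<Longrightarrow> close_at k x t = t"
  by (induction t arbitrary: k) auto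

lemma close_plugE: "evctx F \<Longrightarrow> x \<notin> fvE F \<Longrightarrow> close_at k x (plugE F (FV x)) = plugE F (BV k)"
  by (induction F) (auto simp: close_fresh)

lemma lc_plugE_BV: "evctx F \<Longrightarrow> lc_at k (plugE F (BV i)) \<longleftrightarrow> i < k"
  by (induction F) (auto intro: lc_at_mono)

lemma lc_plugE_gen: "evctx F \<Longrightarrow> lc_at k t \<Longrightarrow> lc_at k (plugE F t)"
  by (induction F) (auto intro: lc_at_mono)

lemma lc_plugE_inner: "lc_at k (plugE F t) \<Longrightarrow> lc_at k t"
  by (induction F) auto

lemma evctx_lc_plug: "evctx F \<Longrightarrow> lc t \<Longrightarrow> lc (plugE F t)"
  using lc_plugE_gen by blast

lemma rd_ctx: "evctx E \<Longrightarrow> rd t t' \<Longrightarrow> rd (plugE E t) (plugE E t')"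
  by (induction E) (auto intro: rd.intros)

lemma lam_plug_eq: "pure F \<Longrightarrow> x \<notin> fvE F \<Longrightarrow>
  lam x (Reset (plugE F (FV x))) = Lam (Reset (plugE F (BV 0)))"
  by (simp add: lam_def close_plugE pure_evctx)

lemma red_imp_rd: "red t t' \<Longrightarrow> rd t t'"
proof (induction rule: red.induct)
  case (beta E v b)
  then show ?case using lc_plugE_inner[of 0 E "App (Lam b) v"] by (auto intro!: rd_ctx rd.intros)
next
  case (shift E F x b)
  have "lc (plugE F (Shift b))" using shift lc_plugE_inner[of 0 E "Reset (plugE F (Shift b))"] by auto
  then have "rd (Reset (plugE F (Shift b))) (Reset (opn b (Lam (Reset (plugE F (BV 0))))))"
    using shift by (intro rd.rshift) auto
  then show ?case using shift by (auto simp: lam_plug_eq intro!: rd_ctx)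
next
  case (reset E v)
  then show ?case using lc_plugE_inner[of 0 E "Reset v"] by (auto intro!: rd_ctx rd.intros)
qed

lemma red_appL: "red t t' \<Longrightarrow> lc u \<Longrightarrow> red (App t u) (App t' u)"
proof (induction rule: red.induct)
  case (beta E v b)
  then show ?case using red.beta[where E="ApL E u" and v=v and b=b] by auto
next
  case (shift E F x b)
  then show ?case using red.shift[of "ApL E u" F x b] by auto
next
  case (reset E v)
  then show ?case using red.reset[of "ApL E u" v] by auto
qed

lemma red_appR: "red t t' \<Longrightarrow> is_val u \<Longrightarrow> lc u \<Longrightarrow> red (App u t) (App u t')"
proof (induction rule: red.induct)
  case (beta E v b)
  then show ?case using red.beta[where E="ApR u E" and v=v and b=b] by auto
next
  case (shift E F x b)
  then show ?case using red.shift[of "ApR u E" F x b] by auto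
next
  case (reset E v)
  then show ?case using red.reset[of "ApR u E" v] by auto
qed

lemma red_rst: "red t t' \<Longrightarrow> red (Reset t) (Reset t')"
proof (induction rule: red.induct)
  case (beta E v b)
  then show ?case using red.beta[where E="Rst E" and v=v and b=b] by auto
next
  case (shift E F x b)
  then show ?case using red.shift[of "Rst E" F x b] by auto
next
  case (reset E v)
  then show ?case using red.reset[of "Rst E" v] by auto
qed

lemma rd_imp_red: "rd t t' \<Longrightarrow> red t t'"
proof (induction rule: rd.induct)
  case (rbeta b v)
  then show ?case using red.beta[where E=Hole and v=v and b=b] by auto
next
  case (rreset v)
  then show ?case using red.reset[of Hole v] by auto
next
  case (rshift F b)
  obtain x where x: "x \<notin> fvE F" using finite_fvE ex_new_if_finite infinite_UNIV_nat by blast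
  then show ?case using red.shift[of Hole F x b] rshift by (auto simp: lam_plug_eq)
qed (auto intro: red_appL red_appR red_rst)

lemma red_rd: "red = rd"
  using red_imp_rd rd_imp_red by (intro ext) blast

lemma val_nored: "is_val v \<Longrightarrow> \<not> rd v t"
  by (cases v) (auto elim: rd.cases)

lemma val_nored'[simp]: "is_val v \<Longrightarrow> rd v t \<longleftrightarrow> False"
  using val_nored by blast

lemma lam_nored[simp]: "rd (Lam b) t \<longleftrightarrow> False"
  using val_nored by force

lemma ctrl_not_val: "pure F \<Longrightarrow> \<not> is_val (plugE F (Shift b))"
  by (cases F) auto

lemma ctrl_not_Lam[simp]: "plugE F (Shift b) \<noteq> Lam c"
  by (cases F) auto

lemma ctrl_not_FV[simp]: "plugE F (Shift b) \<noteq> FV c"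
  by (cases F) auto

lemma ctrl_nored: "pure F \<Longrightarrow> \<not> rd (plugE F (Shift b)) t"
proof (induction F arbitrary: t)
  case Hole
  then show ?case by (auto elim: rd.cases)
next
  case (ApR v F)
  then show ?case
    by (auto elim!: rd.cases[of "App v (plugE F (Shift b))"] dest: ctrl_not_val)
next
  case (ApL F s)
  then show ?case
    by (auto elim!: rd.cases[of "App (plugE F (Shift b)) s"] dest: ctrl_not_val)
qed auto

lemma plugF_inj: "pure F \<Longrightarrow> pure F' \<Longrightarrow> plugE F (Shift b) = plugE F' (Shift b') \<Longrightarrow> F = F' \<and> b = b'"
proof (induction F arbitrary: F')
  case Hole
  then show ?case by (cases F') auto
next
  case (ApR v F)
  then show ?case by (cases F') (auto dest: ctrl_not_val)
next
  case (ApL F s)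
  then show ?case by (cases F') (auto dest: ctrl_not_val)
qed auto

lemma ctrl_not_val'[simp]: "pure F \<Longrightarrow> is_val (plugE F (Shift b)) \<longleftrightarrow> False"
  using ctrl_not_val by blast

lemma ctrl_nored'[simp]: "pure F \<Longrightarrow> rd (plugE F (Shift b)) t \<longleftrightarrow> False"
  using ctrl_nored by blast

lemma rd_AppE:
  assumes "rd (App t u) r"
  obtains (beta) b where "t = Lam b" "is_val u" "lc u" "lc (Lam b)" "r = opn b u"
  | (left) t' where "rd t t'" "lc u" "r = App t' u"
  | (right) u' where "is_val t" "lc t" "rd u u'" "r = App t u'"
  using assms by (cases rule: rd.cases) auto

lemma rd_ResetE:
  assumes "rd (Reset t) r"
  obtains (val) "is_val t" "lc t" "r = t"
  | (sh) F b where "pure F" "t = plugE F (Shift b)" "lc t"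
      "r = Reset (opn b (Lam (Reset (plugE F (BV 0)))))"
  | (inner) t' where "rd t t'" "r = Reset t'"
  using assms by (cases rule: rd.cases) auto

lemma rd_ShiftE: "rd (Shift b) r \<Longrightarrow> P"
  by (cases rule: rd.cases) auto

lemma rd_det: "rd t t1 \<Longrightarrow> rd t t2 \<Longrightarrow> t1 = t2"
proof (induction t arbitrary: t1 t2)
  case (App t u)
  from App.prems(1) show ?case
  proof (cases rule: rd_AppE)
    case (beta b)
    from App.prems(2) show ?thesis by (cases rule: rd_AppE) (use beta in auto)
  next
    case (left t')
    from App.prems(2) show ?thesis
      by (cases rule: rd_AppE) (use left App.IH(1) in auto)
  next
    case (right u')
    from App.prems(2) show ?thesis
      by (cases rule: rd_AppE) (use right App.IH(2) in auto)
  qed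
next
  case (Reset t)
  from Reset.prems(1) show ?case
  proof (cases rule: rd_ResetE)
    case val
    from Reset.prems(2) show ?thesis by (cases rule: rd_ResetE) (use val in auto)
  next
    case (sh F b)
    from Reset.prems(2) show ?thesis
    proof (cases rule: rd_ResetE)
      case (sh F' b')
      then show ?thesis using \<open>pure F\<close> \<open>t = plugE F (Shift b)\<close> \<open>t1 = _\<close> plugF_inj[of F F' b b'] by auto
    qed (use sh in auto)
  next
    case (inner t')
    from Reset.prems(2) show ?thesis
      by (cases rule: rd_ResetE) (use inner Reset.IH in auto)
  qed
qed (auto elim: rd.cases)

lemma rd_lc: "rd t t' \<Longrightarrow> lc t \<and> lc t'"
  by (induction rule: rd.induct)
     (auto intro!: lc_open simp: lc_plugE_BV pure_evctx lc_plugE_gen dest: lc_plugE_inner)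

lemma rd_fv: "rd t t' \<Longrightarrow> fv t' \<subseteq> fv t"
proof (induction rule: rd.induct)
  case (rbeta b v)
  then show ?case using fv_open[of 0 v b] by auto
next
  case (rshift F b)
  then show ?case using fv_open[of 0 "Lam (Reset (plugE F (BV 0)))" b] by (auto simp: fv_plugE)
qed auto

lemma rd_subst: "rd t t' \<Longrightarrow> good s \<Longrightarrow> rd (msubst s t) (msubst s t')"
proof (induction rule: rd.induct)
  case (rbeta b v)
  then show ?case
    by (auto simp: msubst_open is_val_msubst msubst_lc intro!: rd.rbeta simp del: lc_at.simps(3))
      (metis lc_at.simps(3) msubst.simps(3) msubst_lc)
next
  case (rreset v)
  then show ?case by (auto simp: is_val_msubst msubst_lc intro!: rd.rreset)
next
  case (rshift F b)
  have "rd (Reset (plugE (msubstE s F) (Shift (msubst s b))))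
      (Reset (opn (msubst s b) (Lam (Reset (plugE (msubstE s F) (BV 0))))))"
    apply (rule rd.rshift)
    using rshift pure_msubstE apply blast
    using rshift msubst_lc[of 0 "plugE F (Shift b)" s] by (simp add: msubst_plugE)
  then show ?case using rshift by (simp add: msubst_plugE msubst_open)
qed (auto simp: is_val_msubst msubst_lc intro: rd.intros)

lemma closed_nf:
  "lc t \<Longrightarrow> fv t = {} \<Longrightarrow> \<not> (\<exists>t'. rd t t') \<Longrightarrow>
   (\<exists>b. t = Lam b) \<or> (\<exists>F b. pure F \<and> t = plugE F (Shift b))"
proof (induction t)
  case (App t u)
  have nt: "\<not> (\<exists>t'. rd t t')" using App.prems by (auto intro: rd.rappL)
  then have "(\<exists>b. t = Lam b) \<or> (\<exists>F b. pure F \<and> t = plugE F (Shift b))"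
    using App by auto
  then show ?case
  proof
    assume "\<exists>b. t = Lam b"
    then obtain b where tb: "t = Lam b" by blast
    have nu: "\<not> (\<exists>t'. rd u t')"
    proof
      assume "\<exists>t'. rd u t'"
      then obtain u' where "rd u u'" by blast
      then have "rd (App t u) (App t u')" using App.prems tb by (intro rd.rappR) auto
      then show False using App.prems by blast
    qed
    then have "(\<exists>b. u = Lam b) \<or> (\<exists>F b. pure F \<and> u = plugE F (Shift b))"
      using App by auto
    then show ?thesis
    proof
      assume "\<exists>b. u = Lam b"
      then obtain c where uc: "u = Lam c" by blast
      have "rd (App (Lam b) u) (opn b u)" using App.prems tb uc by (intro rd.rbeta) auto
      then show ?thesis using App.prems tb by blast
    next
      assume "\<exists>F b. pure F \<and> u = plugE F (Shift b)"
      then obtain F c where "pure F" "u = plugE F (Shift c)" by blast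
      then show ?thesis using tb App.prems
        by (intro disjI2 exI[of _ "ApR t F"] exI[of _ c]) auto
    qed
  next
    assume "\<exists>F b. pure F \<and> t = plugE F (Shift b)"
    then obtain F c where "pure F" "t = plugE F (Shift c)" by blast
    then show ?thesis using App.prems
      by (intro disjI2 exI[of _ "ApL F u"] exI[of _ c]) auto
  qed
next
  case (Reset t)
  have nt: "\<not> (\<exists>t'. rd t t')" using Reset.prems by (auto intro: rd.rrst)
  then have "(\<exists>b. t = Lam b) \<or> (\<exists>F b. pure F \<and> t = plugE F (Shift b))"
    using Reset by auto
  then show ?case
  proof
    assume "\<exists>b. t = Lam b"
    then obtain c where "t = Lam c" by blast
    then have "rd (Reset t) t" using Reset.prems by (intro rd.rreset) auto
    then show ?thesis using Reset.prems by blast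
  next
    assume "\<exists>F b. pure F \<and> t = plugE F (Shift b)"
    then obtain F c where "pure F" "t = plugE F (Shift c)" by blast
    then have "rd (Reset t) (Reset (opn c (Lam (Reset (plugE F (BV 0))))))"
      using Reset.prems rd.rshift[of F c] by auto
    then show ?thesis using Reset.prems by blast
  qed
next
  case (Shift t)
  then show ?case by (intro disjI2 exI[of _ Hole]) auto
qed auto


abbreviation nf :: "trm \<Rightarrow> bool" where "nf t \<equiv> \<not> (\<exists>t'. rd t t')"

lemma pow_step: "rd s s' \<Longrightarrow> (rd ^^ Suc j) s n \<Longrightarrow> (rd ^^ j) s' n"
proof -
  assume a: "rd s s'" "(rd ^^ Suc j) s n"
  from a(2) obtain y where "rd s y" "(rd ^^ j) y n" by (rule relpowp_Suc_E2)
  then show ?thesis using rd_det[OF a(1)] by simp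
qed

lemma pow_nf: "(rd ^^ j) s n \<Longrightarrow> nf s \<Longrightarrow> j = 0 \<and> n = s"
proof (cases j)
  case (Suc j')
  assume a: "(rd ^^ j) s n" "nf s"
  then have "(rd ^^ Suc j') s n" using Suc by simp
  then obtain y where "rd s y" by (rule relpowp_Suc_E2)
  then show ?thesis using a by blast
qed simp

lemma pow_split: "(rd ^^ i) s m \<Longrightarrow> (rd ^^ j) s n \<Longrightarrow> nf n \<Longrightarrow> i \<le> j \<and> (rd ^^ (j - i)) m n"
proof (induction i arbitrary: s j)
  case 0
  then show ?case by auto
next
  case (Suc i)
  from Suc.prems(1) obtain s' where s': "rd s s'" "(rd ^^ i) s' m" by (rule relpowp_Suc_E2)
  show ?case
  proof (cases j)
    case 0
    then show ?thesis using Suc.prems s' by auto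
  next
    case (Suc j')
    then have "(rd ^^ j') s' n" using pow_step s' Suc.prems by blast
    then show ?thesis using Suc.IH[of s' j'] s' Suc.prems \<open>j = Suc j'\<close> by auto
  qed
qed

lemma pow_det: "(rd ^^ j) s n \<Longrightarrow> nf n \<Longrightarrow> (rd ^^ j') s n' \<Longrightarrow> nf n' \<Longrightarrow> j = j' \<and> n = n'"
  using pow_split[of j s n j' n'] pow_split[of j' s n' j n] pow_nf by fastforce

lemma pow_ctx: "(rd ^^ j) s m \<Longrightarrow> evctx E \<Longrightarrow> (rd ^^ j) (plugE E s) (plugE E m)"
proof (induction j arbitrary: s)
  case (Suc j)
  from Suc.prems(1) obtain y where "rd s y" "(rd ^^ j) y m" by (rule relpowp_Suc_E2)
  then show ?case using Suc by (intro relpowp_Suc_I2[of _ _ "plugE E y"]) (auto intro: rd_ctx)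
qed auto

lemma star_ctx: "rd\<^sup>*\<^sup>* s m \<Longrightarrow> evctx E \<Longrightarrow> rd\<^sup>*\<^sup>* (plugE E s) (plugE E m)"
  by (induction rule: rtranclp_induct) (auto intro: rtranclp.rtrancl_into_rtrancl rd_ctx)

lemma pow_subst: "(rd ^^ j) s m \<Longrightarrow> good g \<Longrightarrow> (rd ^^ j) (msubst g s) (msubst g m)"
proof (induction j arbitrary: s)
  case (Suc j)
  from Suc.prems(1) obtain y where "rd s y" "(rd ^^ j) y m" by (rule relpowp_Suc_E2)
  then show ?case using Suc by (intro relpowp_Suc_I2[of _ _ "msubst g y"]) (auto intro: rd_subst)
qed auto

lemma star_subst: "rd\<^sup>*\<^sup>* s m \<Longrightarrow> good g \<Longrightarrow> rd\<^sup>*\<^sup>* (msubst g s) (msubst g m)"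
  by (induction rule: rtranclp_induct) (auto intro: rtranclp.rtrancl_into_rtrancl rd_subst)

lemma ctx_decomp:
  "evctx E \<Longrightarrow> (rd ^^ j) (plugE E s) n \<Longrightarrow> nf n \<Longrightarrow>
   \<exists>j1 m. j1 \<le> j \<and> (rd ^^ j1) s m \<and> nf m \<and> (rd ^^ (j - j1)) (plugE E m) n"
proof (induction j arbitrary: s)
  case 0
  then have "nf s" using rd_ctx by fastforce
  then show ?case using 0 by (intro exI[of _ 0]) auto
next
  case (Suc j)
  show ?case
  proof (cases "nf s")
    case True
    then show ?thesis using Suc.prems by (intro exI[of _ 0]) auto
  next
    case False
    then obtain s' where s': "rd s s'" by blast
    have "rd (plugE E s) (plugE E s')" using rd_ctx[OF Suc.prems(1) s'] .
    then have "(rd ^^ j) (plugE E s') n" using pow_step Suc.prems(2) by blast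
    then obtain j1 m where h: "j1 \<le> j" "(rd ^^ j1) s' m" "nf m" "(rd ^^ (j - j1)) (plugE E m) n"
      using Suc.IH[of s'] Suc.prems(1,3) by blast
    have "(rd ^^ Suc j1) s m" using s' h(2) by (rule relpowp_Suc_I2)
    moreover have "Suc j1 \<le> Suc j" "Suc j - Suc j1 = j - j1" using h(1) by auto
    ultimately show ?thesis using h(3,4) by metis
  qed
qed

lemma subst_decomp:
  "good g \<Longrightarrow> (rd ^^ j) (msubst g s) n \<Longrightarrow> nf n \<Longrightarrow>
   \<exists>j1 m. j1 \<le> j \<and> (rd ^^ j1) s m \<and> nf m \<and> (rd ^^ (j - j1)) (msubst g m) n"
proof (induction j arbitrary: s)
  case 0
  then have "nf s" using rd_subst by fastforce
  then show ?case using 0 by (intro exI[of _ 0]) auto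
next
  case (Suc j)
  show ?case
  proof (cases "nf s")
    case True
    then show ?thesis using Suc.prems by (intro exI[of _ 0]) auto
  next
    case False
    then obtain s' where s': "rd s s'" by blast
    have "rd (msubst g s) (msubst g s')" using rd_subst[OF s' Suc.prems(1)] .
    then have "(rd ^^ j) (msubst g s') n" using pow_step Suc.prems(2) by blast
    then obtain j1 m where h: "j1 \<le> j" "(rd ^^ j1) s' m" "nf m" "(rd ^^ (j - j1)) (msubst g m) n"
      using Suc.IH[of s'] Suc.prems(1,3) by blast
    have "(rd ^^ Suc j1) s m" using s' h(2) by (rule relpowp_Suc_I2)
    moreover have "Suc j1 \<le> Suc j" "Suc j - Suc j1 = j - j1" using h(1) by auto
    ultimately show ?thesis using h(3,4) by metis
  qed
qed

lemma star_lc: "rd\<^sup>*\<^sup>* s n \<Longrightarrow> lc s \<Longrightarrow> lc n"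
proof (induction rule: rtranclp_induct)
  case (step y z)
  then show ?case using rd_lc[OF step(2)] by simp
qed simp

lemma star_fv: "rd\<^sup>*\<^sup>* s n \<Longrightarrow> fv n \<subseteq> fv s"
proof (induction rule: rtranclp_induct)
  case (step y z)
  then show ?case using rd_fv[OF step(2)] by simp
qed simp

lemma pow_lc: "(rd ^^ j) s n \<Longrightarrow> lc s \<Longrightarrow> lc n"
  using star_lc[OF relpowp_imp_rtranclp] .

lemma pow_fv: "(rd ^^ j) s n \<Longrightarrow> fv n \<subseteq> fv s"
  using star_fv[OF relpowp_imp_rtranclp] .

lemma ctrl_not_Reset[simp]: "pure F \<Longrightarrow> plugE F (Shift b) \<noteq> Reset c"
  by (cases F) simp_all

lemma reset_vals:
  "(rd ^^ j) (Reset s) n \<Longrightarrow> nf n \<Longrightarrow> lc s \<Longrightarrow> fv s = {} \<Longrightarrow> is_val n"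
proof (induction j arbitrary: s)
  case 0
  then have "nf (Reset s)" by auto
  moreover have "lc (Reset s)" "fv (Reset s) = {}" using 0 by auto
  ultimately have "(\<exists>F b. pure F \<and> Reset s = plugE F (Shift b))" using closed_nf[of "Reset s"] by auto
  then show ?case using ctrl_not_Reset by metis
next
  case (Suc j)
  from Suc.prems(1) obtain r where r: "rd (Reset s) r" "(rd ^^ j) r n" by (rule relpowp_Suc_E2)
  from r(1) show ?case
  proof (cases rule: rd_ResetE)
    case val
    then show ?thesis using r pow_nf[of j s n] by auto
  next
    case (sh F b)
    have "lc r" "fv r = {}" using rd_lc[OF r(1)] rd_fv[OF r(1)] Suc.prems by auto
    then show ?thesis using Suc.IH[of "opn b (Lam (Reset (plugE F (BV 0))))"] sh r Suc.prems by auto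
  next
    case (inner t')
    have "lc r" "fv r = {}" using rd_lc[OF r(1)] rd_fv[OF r(1)] Suc.prems by auto
    then show ?thesis using Suc.IH[of t'] inner r Suc.prems by auto
  qed
qed

lemma eval_ev: "eval s n \<longleftrightarrow> rd\<^sup>*\<^sup>* s n \<and> nf n"
  by (simp add: eval_def irreducible_def red_rd)


definition cl :: "trm \<Rightarrow> bool" where "cl t \<longleftrightarrow> lc t \<and> fv t = {}"

fun L :: "nat \<Rightarrow> trm \<Rightarrow> trm \<Rightarrow> bool" where
  "L 0 n0 n1 \<longleftrightarrow> cl n0 \<and> cl n1 \<and> ((\<exists>b0 b1. n0 = Lam b0 \<and> n1 = Lam b1) \<or>
     (\<exists>F0 b0 F1 b1. pure F0 \<and> pure F1 \<and> n0 = plugE F0 (Shift b0) \<and> n1 = plugE F1 (Shift b1)))"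
| "L (Suc k) n0 n1 \<longleftrightarrow> L k n0 n1 \<and>
   (\<forall>b0 b1 u0 u1. n0 = Lam b0 \<longrightarrow> n1 = Lam b1 \<longrightarrow> L k u0 u1 \<longrightarrow> is_val u0 \<longrightarrow> is_val u1 \<longrightarrow>
       (\<forall>j n. j \<le> k \<longrightarrow> (rd ^^ j) (opn b0 u0) n \<longrightarrow> nf n \<longrightarrow>
          (\<exists>n1. rd\<^sup>*\<^sup>* (opn b1 u1) n1 \<and> nf n1 \<and> L (k - j) n n1))) \<and>
   (\<forall>F0 b0 F1 b1. pure F0 \<longrightarrow> pure F1 \<longrightarrow> n0 = plugE F0 (Shift b0) \<longrightarrow> n1 = plugE F1 (Shift b1) \<longrightarrow>
     (\<forall>v0 v1. L k v0 v1 \<longrightarrow> is_val v0 \<longrightarrow> is_val v1 \<longrightarrow>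
       (\<forall>j n. j \<le> k \<longrightarrow> (rd ^^ j) (plugE F0 v0) n \<longrightarrow> nf n \<longrightarrow>
          (\<exists>n1. rd\<^sup>*\<^sup>* (plugE F1 v1) n1 \<and> nf n1 \<and> L (k - j) n n1))) \<and>
     (\<forall>c0 c1. L k c0 c1 \<longrightarrow> is_val c0 \<longrightarrow> is_val c1 \<longrightarrow>
       (\<forall>j n. j \<le> k \<longrightarrow> (rd ^^ j) (Reset (opn b0 c0)) n \<longrightarrow> nf n \<longrightarrow>
          (\<exists>n1. rd\<^sup>*\<^sup>* (Reset (opn b1 c1)) n1 \<and> nf n1 \<and> L (k - j) n n1))))"

definition EV :: "nat \<Rightarrow> trm \<Rightarrow> trm \<Rightarrow> bool" where
  "EV k s0 s1 \<longleftrightarrow> (\<forall>j n. j \<le> k \<longrightarrow> (rd ^^ j) s0 n \<longrightarrow> nf n \<longrightarrow>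
          (\<exists>n1. rd\<^sup>*\<^sup>* s1 n1 \<and> nf n1 \<and> L (k - j) n n1))"

definition Frel :: "nat \<Rightarrow> ectx \<Rightarrow> ectx \<Rightarrow> bool" where
  "Frel k F0 F1 \<longleftrightarrow> (\<forall>v0 v1. L k v0 v1 \<longrightarrow> is_val v0 \<longrightarrow> is_val v1 \<longrightarrow> EV k (plugE F0 v0) (plugE F1 v1))"

definition RFrel :: "nat \<Rightarrow> ectx \<Rightarrow> ectx \<Rightarrow> bool" where
  "RFrel k F0 F1 \<longleftrightarrow> (\<forall>v0 v1. L k v0 v1 \<longrightarrow> is_val v0 \<longrightarrow> is_val v1 \<longrightarrow>
      EV k (Reset (plugE F0 v0)) (Reset (plugE F1 v1)))"

lemma L_Suc: "L (Suc k) n0 n1 \<longleftrightarrow> L k n0 n1 \<and>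
   (\<forall>b0 b1 u0 u1. n0 = Lam b0 \<longrightarrow> n1 = Lam b1 \<longrightarrow> L k u0 u1 \<longrightarrow> is_val u0 \<longrightarrow> is_val u1 \<longrightarrow>
       EV k (opn b0 u0) (opn b1 u1)) \<and>
   (\<forall>F0 b0 F1 b1. pure F0 \<longrightarrow> pure F1 \<longrightarrow> n0 = plugE F0 (Shift b0) \<longrightarrow> n1 = plugE F1 (Shift b1) \<longrightarrow>
     Frel k F0 F1 \<and>
     (\<forall>c0 c1. L k c0 c1 \<longrightarrow> is_val c0 \<longrightarrow> is_val c1 \<longrightarrow> EV k (Reset (opn b0 c0)) (Reset (opn b1 c1))))"
  unfolding EV_def Frel_def by (simp only: L.simps)

declare L.simps(2)[simp del]

lemma L_mono: "L k n0 n1 \<Longrightarrow> i \<le> k \<Longrightarrow> L i n0 n1"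
proof (induction k)
  case (Suc k)
  then show ?case by (cases "i = Suc k") (auto simp: L_Suc)
qed auto

lemma L_0: "L k n0 n1 \<Longrightarrow> L 0 n0 n1"
  using L_mono by blast

lemma L_cl: "L k n0 n1 \<Longrightarrow> cl n0 \<and> cl n1"
  using L_0 L.simps(1) by blast

lemma L_kind: "L k n0 n1 \<Longrightarrow> (\<exists>b0 b1. n0 = Lam b0 \<and> n1 = Lam b1) \<or>
     (\<exists>F0 b0 F1 b1. pure F0 \<and> pure F1 \<and> n0 = plugE F0 (Shift b0) \<and> n1 = plugE F1 (Shift b1))"
  using L_0 L.simps(1) by blast

lemma L_val: "L k v0 v1 \<Longrightarrow> is_val v0 \<Longrightarrow> \<exists>b0 b1. v0 = Lam b0 \<and> v1 = Lam b1"
  using L_kind[of k v0 v1] by auto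

lemma L_val': "L k v0 v1 \<Longrightarrow> is_val v1 \<Longrightarrow> \<exists>b0 b1. v0 = Lam b0 \<and> v1 = Lam b1"
  using L_kind[of k v0 v1] by auto

lemma L_lam_app: "L (Suc k) (Lam b0) (Lam b1) \<Longrightarrow> L k u0 u1 \<Longrightarrow> is_val u0 \<Longrightarrow> is_val u1 \<Longrightarrow>
   EV k (opn b0 u0) (opn b1 u1)"
  by (simp add: L_Suc)

lemma L_ctrl:
  assumes "L (Suc k) (plugE F0 (Shift b0)) (plugE F1 (Shift b1))" "pure F0" "pure F1"
  shows "Frel k F0 F1 \<and>
     (\<forall>c0 c1. L k c0 c1 \<longrightarrow> is_val c0 \<longrightarrow> is_val c1 \<longrightarrow> EV k (Reset (opn b0 c0)) (Reset (opn b1 c1)))"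
  using assms by (simp add: L_Suc)

lemma EV_mono: "EV k s0 s1 \<Longrightarrow> i \<le> k \<Longrightarrow> EV i s0 s1"
  unfolding EV_def
proof (intro allI impI)
  fix j n assume a: "\<forall>j n. j \<le> k \<longrightarrow> (rd ^^ j) s0 n \<longrightarrow> nf n \<longrightarrow>
          (\<exists>n1. rd\<^sup>*\<^sup>* s1 n1 \<and> nf n1 \<and> L (k - j) n n1)" "i \<le> k" "j \<le> i" "(rd ^^ j) s0 n" "nf n"
  then obtain n1 where "rd\<^sup>*\<^sup>* s1 n1" "nf n1" "L (k - j) n n1" by (meson le_trans)
  moreover have "i - j \<le> k - j" using a by simp
  ultimately show "\<exists>n1. rd\<^sup>*\<^sup>* s1 n1 \<and> nf n1 \<and> L (i - j) n n1" using L_mono by blast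
qed

lemma EV_nf_intro: "nf s0 \<Longrightarrow> rd\<^sup>*\<^sup>* s1 n1 \<Longrightarrow> nf n1 \<Longrightarrow> L k s0 n1 \<Longrightarrow> EV k s0 s1"
  unfolding EV_def
proof (intro allI impI)
  fix j n assume a: "nf s0" "rd\<^sup>*\<^sup>* s1 n1" "nf n1" "L k s0 n1" "j \<le> k" "(rd ^^ j) s0 n"
  then have "j = 0" "n = s0" using pow_nf by blast+
  then show "\<exists>n1. rd\<^sup>*\<^sup>* s1 n1 \<and> nf n1 \<and> L (k - j) n n1" using a by auto
qed

lemma EV_nf_elim: "nf s0 \<Longrightarrow> EV k s0 s1 \<Longrightarrow> \<exists>n1. rd\<^sup>*\<^sup>* s1 n1 \<and> nf n1 \<and> L k s0 n1"
  unfolding EV_def using relpowp_0_I[of rd s0] by (metis diff_zero le0)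

lemma EV_back: "(rd ^^ i) s0 s0' \<Longrightarrow> EV (k - i) s0' s1 \<Longrightarrow> EV k s0 s1"
  unfolding EV_def
proof (intro allI impI)
  fix j n
  assume a: "(rd ^^ i) s0 s0'" "\<forall>j n. j \<le> k - i \<longrightarrow> (rd ^^ j) s0' n \<longrightarrow> nf n \<longrightarrow>
      (\<exists>n1. rd\<^sup>*\<^sup>* s1 n1 \<and> nf n1 \<and> L (k - i - j) n n1)"
    "j \<le> k" "(rd ^^ j) s0 n" "nf n"
  from pow_split[OF a(1) a(4) a(5)] have h: "i \<le> j" "(rd ^^ (j - i)) s0' n" by auto
  then have "j - i \<le> k - i" using a(3) by auto
  then obtain n1 where "rd\<^sup>*\<^sup>* s1 n1" "nf n1" "L (k - i - (j - i)) n n1" using a(2) h a(5) by blast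
  moreover have "k - i - (j - i) = k - j" using h a(3) by auto
  ultimately show "\<exists>n1. rd\<^sup>*\<^sup>* s1 n1 \<and> nf n1 \<and> L (k - j) n n1" by auto
qed

lemma EV_back1: "rd s0 s0' \<Longrightarrow> EV k s0' s1 \<Longrightarrow> EV (Suc k) s0 s1"
proof -
  assume a: "rd s0 s0'" "EV k s0' s1"
  have "(rd ^^ Suc 0) s0 s0'" using relpowp_Suc_I2[OF a(1) relpowp_0_I[of rd s0']] .
  from EV_back[OF this, of "Suc k"] a(2) show ?thesis by simp
qed

lemma EV_fwd: "(rd ^^ i) s0 s0' \<Longrightarrow> EV k s0 s1 \<Longrightarrow> i \<le> k \<Longrightarrow> EV (k - i) s0' s1"
  unfolding EV_def
proof (intro allI impI)
  fix j n
  assume a: "(rd ^^ i) s0 s0'" "\<forall>j n. j \<le> k \<longrightarrow> (rd ^^ j) s0 n \<longrightarrow> nf n \<longrightarrow>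
      (\<exists>n1. rd\<^sup>*\<^sup>* s1 n1 \<and> nf n1 \<and> L (k - j) n n1)" "i \<le> k"
    "j \<le> k - i" "(rd ^^ j) s0' n" "nf n"
  have r: "(rd ^^ (i + j)) s0 n" using relpowp_trans[OF a(1) a(5)] .
  have "i + j \<le> k" "k - (i + j) = k - i - j" using a(3,4) by auto
  then show "\<exists>n1. rd\<^sup>*\<^sup>* s1 n1 \<and> nf n1 \<and> L (k - i - j) n n1" using a(2) r a(6) by metis
qed

lemma EV_fwd1: "rd s0 s0' \<Longrightarrow> EV (Suc k) s0 s1 \<Longrightarrow> EV k s0' s1"
proof -
  assume a: "rd s0 s0'" "EV (Suc k) s0 s1"
  have "(rd ^^ Suc 0) s0 s0'" using relpowp_Suc_I2[OF a(1) relpowp_0_I[of rd s0']] .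
  from EV_fwd[OF this a(2)] show ?thesis by simp
qed

lemma star_det: "rd\<^sup>*\<^sup>* s n \<Longrightarrow> nf n \<Longrightarrow> rd s s' \<Longrightarrow> rd\<^sup>*\<^sup>* s' n"
proof -
  assume a: "rd\<^sup>*\<^sup>* s n" "nf n" "rd s s'"
  from a(1) show ?thesis
  proof (cases rule: converse_rtranclpE)
    case base
    then show ?thesis using a by blast
  next
    case (step y)
    then show ?thesis using rd_det[OF a(3)] by simp
  qed
qed

lemma EV_right: "rd\<^sup>*\<^sup>* s1 s1' \<Longrightarrow> EV k s0 s1' \<Longrightarrow> EV k s0 s1"
  unfolding EV_def by (meson rtranclp_trans)

lemma EV_right_fwd: "rd s1 s1' \<Longrightarrow> EV k s0 s1 \<Longrightarrow> EV k s0 s1'"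
  unfolding EV_def using star_det by blast


lemma EV_0_red: "\<not> nf s0 \<Longrightarrow> EV 0 s0 s1"
  unfolding EV_def by auto

lemma open_plugE: "evctx F \<Longrightarrow> open_at k u (plugE F t) = plugE F (open_at k u t)"
  by (induction F) auto

lemma cl_plugE: "evctx F \<Longrightarrow> fvE F = {} \<Longrightarrow> cl t \<Longrightarrow> cl (plugE F t)"
  unfolding cl_def by (auto simp: fv_plugE intro: lc_plugE_gen)

lemma EV_app:
  assumes "L K w0 w1" "is_val w0" "L (K - 1) u0 u1" "is_val u0"
  shows "EV K (App w0 u0) (App w1 u1)"
proof -
  obtain b0 b1 where w: "w0 = Lam b0" "w1 = Lam b1" using L_val assms by blast
  obtain c0 c1 where u: "u0 = Lam c0" "u1 = Lam c1" using L_val assms by blast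
  have cw: "cl w0" "cl w1" "cl u0" "cl u1" using L_cl assms by auto
  have r0: "rd (App w0 u0) (opn b0 u0)" unfolding w(1) using cw w u by (intro rd.rbeta) (auto simp: cl_def)
  have r1: "rd (App w1 u1) (opn b1 u1)" unfolding w(2) using cw w u by (intro rd.rbeta) (auto simp: cl_def)
  show ?thesis
  proof (cases K)
    case 0
    then show ?thesis using r0 EV_0_red by blast
  next
    case (Suc K')
    have "EV K' (opn b0 u0) (opn b1 u1)"
      using L_lam_app[of K' b0 b1 u0 u1] assms w u Suc by simp
    then have "EV K (App w0 u0) (opn b1 u1)" using EV_back1[OF r0] Suc by simp
    then show ?thesis using EV_right r1 by blast
  qed
qed

lemma plug_lemma:
  "pure F0 \<Longrightarrow> pure F1 \<Longrightarrow> fvE F0 = {} \<Longrightarrow> fvE F1 = {} \<Longrightarrow> EV K s0 s1 \<Longrightarrow>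
   (\<forall>i\<le>K. Frel i F0 F1) \<Longrightarrow> EV K (plugE F0 s0) (plugE F1 s1)"
proof (induction K arbitrary: s0 s1 rule: less_induct)
  case (less K)
  note pF = less.prems(1-4)
  have e0: "evctx F0" "evctx F1" using pF pure_evctx by auto
  show ?case unfolding EV_def
  proof (intro allI impI)
    fix j n assume jn: "j \<le> K" "(rd ^^ j) (plugE F0 s0) n" "nf n"
    obtain j1 m0 where h: "j1 \<le> j" "(rd ^^ j1) s0 m0" "nf m0" "(rd ^^ (j - j1)) (plugE F0 m0) n"
      using ctx_decomp[OF e0(1) jn(2,3)] by blast
    have "j1 \<le> K" using h(1) jn(1) by simp
    from less.prems(5)[unfolded EV_def, rule_format, OF this h(2) h(3)]
    obtain m1 where m1: "rd\<^sup>*\<^sup>* s1 m1" "nf m1" "L (K - j1) m0 m1" by blast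
    have right1: "rd\<^sup>*\<^sup>* (plugE F1 s1) (plugE F1 m1)" using star_ctx[OF m1(1) e0(2)] .
    from L_kind[OF m1(3)] show "\<exists>n1. rd\<^sup>*\<^sup>* (plugE F1 s1) n1 \<and> nf n1 \<and> L (K - j) n n1"
    proof
      assume "\<exists>b0 b1. m0 = Lam b0 \<and> m1 = Lam b1"
      then have v: "is_val m0" "is_val m1" by auto
      have "Frel (K - j1) F0 F1" using less.prems(6) by simp
      then have "EV (K - j1) (plugE F0 m0) (plugE F1 m1)" using v m1(3) unfolding Frel_def by blast
      moreover have "j - j1 \<le> K - j1" using h(1) jn(1) by simp
      ultimately obtain n1 where "rd\<^sup>*\<^sup>* (plugE F1 m1) n1" "nf n1" "L (K - j1 - (j - j1)) n n1"
        using h(4) jn(3) unfolding EV_def by blast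
      moreover have "K - j1 - (j - j1) = K - j" using h(1) jn(1) by auto
      ultimately show ?thesis using rtranclp_trans[OF right1] by auto
    next
      assume "\<exists>G0 b0 G1 b1. pure G0 \<and> pure G1 \<and> m0 = plugE G0 (Shift b0) \<and> m1 = plugE G1 (Shift b1)"
      then obtain G0 b0 G1 b1 where G: "pure G0" "pure G1" "m0 = plugE G0 (Shift b0)" "m1 = plugE G1 (Shift b1)"
        by blast
      have eq0: "plugE F0 m0 = plugE (compE F0 G0) (Shift b0)" using G by (simp add: plugE_compE)
      have eq1: "plugE F1 m1 = plugE (compE F1 G1) (Shift b1)" using G by (simp add: plugE_compE)
      have nf0: "nf (plugE F0 m0)" using eq0 G pF by simp
      have nf1: "nf (plugE F1 m1)" using eq1 G pF by simp
      have jj: "j - j1 = 0" "n = plugE F0 m0" using pow_nf[OF h(4) nf0] by auto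
      have clm: "cl m0" "cl m1" using L_cl[OF m1(3)] by auto
      have "\<forall>i. i \<le> K - j1 \<longrightarrow> L i (plugE (compE F0 G0) (Shift b0)) (plugE (compE F1 G1) (Shift b1))"
      proof (intro allI)
        fix i show "i \<le> K - j1 \<longrightarrow> L i (plugE (compE F0 G0) (Shift b0)) (plugE (compE F1 G1) (Shift b1))"
        proof (induction i)
          case 0
          have "cl (plugE F0 m0)" "cl (plugE F1 m1)" using cl_plugE e0 pF clm by auto
          moreover have "\<exists>F0' b0' F1' b1'. pure F0' \<and> pure F1' \<and>
             plugE (compE F0 G0) (Shift b0) = plugE F0' (Shift b0') \<and>
             plugE (compE F1 G1) (Shift b1) = plugE F1' (Shift b1')"
            by (rule exI[of _ "compE F0 G0"], rule exI[of _ b0], rule exI[of _ "compE F1 G1"],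
                rule exI[of _ b1]) (simp add: G pF)
          ultimately show ?case using eq0 eq1 by (simp add: L.simps(1))
        next
          case (Suc i)
          show ?case
          proof
            assume si: "Suc i \<le> K - j1"
            have Li: "L i (plugE (compE F0 G0) (Shift b0)) (plugE (compE F1 G1) (Shift b1))"
              using Suc si by simp
            have LS: "L (Suc i) m0 m1" using L_mono[OF m1(3) si] .
            from L_ctrl[OF LS[unfolded G(3,4)] G(1,2)]
            have FG: "Frel i G0 G1" and body: "\<forall>c0 c1. L i c0 c1 \<longrightarrow> is_val c0 \<longrightarrow> is_val c1 \<longrightarrow>
                EV i (Reset (opn b0 c0)) (Reset (opn b1 c1))" by auto
            have FC: "Frel i (compE F0 G0) (compE F1 G1)"
              unfolding Frel_def
            proof (intro allI impI)
              fix v0 v1 assume v: "L i v0 v1" "is_val v0" "is_val v1"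
              have "EV i (plugE G0 v0) (plugE G1 v1)" using FG v unfolding Frel_def by blast
              moreover have "i < K" using si by simp
              moreover have "\<forall>i'\<le>i. Frel i' F0 F1" using less.prems(6) si by simp
              ultimately have "EV i (plugE F0 (plugE G0 v0)) (plugE F1 (plugE G1 v1))"
                using less.IH[OF _ pF] by blast
              then show "EV i (plugE (compE F0 G0) v0) (plugE (compE F1 G1) v1)"
                by (simp add: plugE_compE)
            qed
            show "L (Suc i) (plugE (compE F0 G0) (Shift b0)) (plugE (compE F1 G1) (Shift b1))"
              unfolding L_Suc
            proof (intro conjI allI impI)
              show "L i (plugE (compE F0 G0) (Shift b0)) (plugE (compE F1 G1) (Shift b1))" using Li .
            next
              fix b0' b1' u0 u1
              assume "plugE (compE F0 G0) (Shift b0) = Lam b0'"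
              then show "EV i (opn b0' u0) (opn b1' u1)" by simp
            next
              fix F0' b0' F1' b1'
              assume a: "pure F0'" "pure F1'" "plugE (compE F0 G0) (Shift b0) = plugE F0' (Shift b0')"
                "plugE (compE F1 G1) (Shift b1) = plugE F1' (Shift b1')"
              have "compE F0 G0 = F0' \<and> b0 = b0'" "compE F1 G1 = F1' \<and> b1 = b1'"
                using plugF_inj[OF _ a(1) a(3)] plugF_inj[OF _ a(2) a(4)] pF G by auto
              then show "Frel i F0' F1'" using FC by auto
            next
              fix F0' b0' F1' b1' c0 c1
              assume a: "pure F0'" "pure F1'" "plugE (compE F0 G0) (Shift b0) = plugE F0' (Shift b0')"
                "plugE (compE F1 G1) (Shift b1) = plugE F1' (Shift b1')" "L i c0 c1" "is_val c0" "is_val c1"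
              have "compE F0 G0 = F0' \<and> b0 = b0'" "compE F1 G1 = F1' \<and> b1 = b1'"
                using plugF_inj[OF _ a(1) a(3)] plugF_inj[OF _ a(2) a(4)] pF G by auto
              then show "EV i (Reset (opn b0' c0)) (Reset (opn b1' c1))" using body a by auto
            qed
          qed
        qed
      qed
      moreover have "j = j1" using jj(1) h(1) by simp
      ultimately have "L (K - j) n (plugE F1 m1)" using jj eq0 eq1 by simp
      then show ?thesis using right1 nf1 by blast
    qed
  qed
qed


lemma ctrl_not_Lam'[simp]: "Lam c \<noteq> plugE F (Shift b)"
  using ctrl_not_Lam by metis

lemma lc_lam_plug_BV: "evctx F \<Longrightarrow> lc (Lam (Reset (plugE F (BV 0))))"
  by (simp add: lc_plugE_BV)

lemma opn_reset_plug: "evctx F \<Longrightarrow> opn (Reset (plugE F (BV 0))) u = Reset (plugE F u)"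
  by (simp add: open_plugE)

lemma rplug_lemma:
  "pure F0 \<Longrightarrow> pure F1 \<Longrightarrow> fvE F0 = {} \<Longrightarrow> fvE F1 = {} \<Longrightarrow> EV K s0 s1 \<Longrightarrow>
   (\<forall>i\<le>K. RFrel i F0 F1) \<Longrightarrow> EV K (Reset (plugE F0 s0)) (Reset (plugE F1 s1))"
proof (induction K arbitrary: s0 s1 rule: less_induct)
  case (less K)
  note pF = less.prems(1-4)
  have e0: "evctx F0" "evctx F1" using pF pure_evctx by auto
  have eR: "evctx (Rst F0)" "evctx (Rst F1)" using e0 by auto
  show ?case unfolding EV_def
  proof (intro allI impI)
    fix j n assume jn: "j \<le> K" "(rd ^^ j) (Reset (plugE F0 s0)) n" "nf n"
    obtain j1 m0 where h: "j1 \<le> j" "(rd ^^ j1) s0 m0" "nf m0" "(rd ^^ (j - j1)) (Reset (plugE F0 m0)) n"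
      using ctx_decomp[OF eR(1), of j s0 n] jn(2,3) by auto
    have "j1 \<le> K" using h(1) jn(1) by simp
    from less.prems(5)[unfolded EV_def, rule_format, OF this h(2) h(3)]
    obtain m1 where m1: "rd\<^sup>*\<^sup>* s1 m1" "nf m1" "L (K - j1) m0 m1" by blast
    have right1: "rd\<^sup>*\<^sup>* (Reset (plugE F1 s1)) (Reset (plugE F1 m1))"
      using star_ctx[OF m1(1) eR(2)] by simp
    from L_kind[OF m1(3)] show "\<exists>n1. rd\<^sup>*\<^sup>* (Reset (plugE F1 s1)) n1 \<and> nf n1 \<and> L (K - j) n n1"
    proof
      assume "\<exists>b0 b1. m0 = Lam b0 \<and> m1 = Lam b1"
      then have v: "is_val m0" "is_val m1" by auto
      have "RFrel (K - j1) F0 F1" using less.prems(6) by simp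
      then have "EV (K - j1) (Reset (plugE F0 m0)) (Reset (plugE F1 m1))" using v m1(3) unfolding RFrel_def by blast
      moreover have "j - j1 \<le> K - j1" using h(1) jn(1) by simp
      ultimately obtain n1 where "rd\<^sup>*\<^sup>* (Reset (plugE F1 m1)) n1" "nf n1" "L (K - j1 - (j - j1)) n n1"
        using h(4) jn(3) unfolding EV_def by blast
      moreover have "K - j1 - (j - j1) = K - j" using h(1) jn(1) by auto
      ultimately show ?thesis using rtranclp_trans[OF right1] by auto
    next
      assume "\<exists>G0 b0 G1 b1. pure G0 \<and> pure G1 \<and> m0 = plugE G0 (Shift b0) \<and> m1 = plugE G1 (Shift b1)"
      then obtain G0 b0 G1 b1 where G: "pure G0" "pure G1" "m0 = plugE G0 (Shift b0)" "m1 = plugE G1 (Shift b1)"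
        by blast
      have clm: "cl m0" "cl m1" using L_cl[OF m1(3)] by auto
      define H0 where "H0 = compE F0 G0"
      define H1 where "H1 = compE F1 G1"
      have pH: "pure H0" "pure H1" using pF G by (auto simp: H0_def H1_def)
      have eH: "evctx H0" "evctx H1" using pH pure_evctx by auto
      have fH: "fvE H0 = {}" "fvE H1 = {}" using clm G pF by (auto simp: H0_def H1_def cl_def fv_plugE)
      have eq0: "plugE F0 m0 = plugE H0 (Shift b0)" using G by (simp add: plugE_compE H0_def)
      have eq1: "plugE F1 m1 = plugE H1 (Shift b1)" using G by (simp add: plugE_compE H1_def)
      have lcH: "lc (plugE H0 (Shift b0))" "lc (plugE H1 (Shift b1))"
        using cl_plugE[OF e0(1) pF(3) clm(1)] cl_plugE[OF e0(2) pF(4) clm(2)] eq0 eq1 by (auto simp: cl_def)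
      define c0 where "c0 = Lam (Reset (plugE H0 (BV 0)))"
      define c1 where "c1 = Lam (Reset (plugE H1 (BV 0)))"
      have r0: "rd (Reset (plugE F0 m0)) (Reset (opn b0 c0))"
        unfolding eq0 c0_def using pH(1) lcH(1) by (rule rd.rshift)
      have r1: "rd (Reset (plugE F1 m1)) (Reset (opn b1 c1))"
        unfolding eq1 c1_def using pH(2) lcH(2) by (rule rd.rshift)
      have "j - j1 \<noteq> 0" using h(4) r0 jn(3) by (metis relpowp_0_E)
      then obtain d where d: "j - j1 = Suc d" by (cases "j - j1") auto
      have hd: "(rd ^^ d) (Reset (opn b0 c0)) n" using pow_step[OF r0] h(4) d by simp
      obtain K2 where K2: "K - j1 = Suc K2" using d jn(1) h(1) by (cases "K - j1") auto
      have dK: "d \<le> K2" using d K2 jn(1) h(1) by simp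
      have LS: "L (Suc K2) m0 m1" using m1(3) K2 by simp
      from L_ctrl[OF LS[unfolded G(3,4)] G(1,2)]
      have body: "\<forall>c0 c1. L K2 c0 c1 \<longrightarrow> is_val c0 \<longrightarrow> is_val c1 \<longrightarrow>
                EV K2 (Reset (opn b0 c0)) (Reset (opn b1 c1))" by auto
      have "\<forall>i. i \<le> K2 \<longrightarrow> L i c0 c1"
      proof (intro allI)
        fix i show "i \<le> K2 \<longrightarrow> L i c0 c1"
        proof (induction i)
          case 0
          have "cl c0" "cl c1" using lc_lam_plug_BV eH fH by (auto simp: cl_def c0_def c1_def fv_plugE)
          then show ?case by (simp add: L.simps(1) c0_def c1_def)
        next
          case (Suc i)
          show ?case
          proof
            assume si: "Suc i \<le> K2"
            have Li: "L i c0 c1" using Suc si by simp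
            have LSi: "L (Suc i) m0 m1" using L_mono[OF LS] si by simp
            from L_ctrl[OF LSi[unfolded G(3,4)] G(1,2)] have FG: "Frel i G0 G1" by auto
            show "L (Suc i) c0 c1"
              unfolding L_Suc
            proof (intro conjI allI impI)
              show "L i c0 c1" using Li .
            next
              fix b0' b1' u0 u1
              assume a: "c0 = Lam b0'" "c1 = Lam b1'" "L i u0 u1" "is_val u0" "is_val u1"
              have "EV i (plugE G0 u0) (plugE G1 u1)" using FG a unfolding Frel_def by blast
              moreover have "i < K" using si K2 by simp
              moreover have "\<forall>i'\<le>i. RFrel i' F0 F1" using less.prems(6) si K2 by simp
              ultimately have "EV i (Reset (plugE F0 (plugE G0 u0))) (Reset (plugE F1 (plugE G1 u1)))"
                using less.IH[OF _ pF] by blast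
              moreover have "b0' = Reset (plugE H0 (BV 0))" "b1' = Reset (plugE H1 (BV 0))"
                using a by (auto simp: c0_def c1_def)
              moreover have "opn b0' u0 = Reset (plugE H0 u0)" "opn b1' u1 = Reset (plugE H1 u1)"
                using opn_reset_plug[OF eH(1)] opn_reset_plug[OF eH(2)] calculation(2,3) by auto
              ultimately show "EV i (opn b0' u0) (opn b1' u1)"
                by (simp add: H0_def H1_def plugE_compE)
            next
              fix F0' b0' F1' b1'
              assume "c0 = plugE F0' (Shift b0')"
              then show "Frel i F0' F1'" by (simp add: c0_def)
            next
              fix F0' b0' F1' b1' cc0 cc1
              assume "c0 = plugE F0' (Shift b0')"
              then show "EV i (Reset (opn b0' cc0)) (Reset (opn b1' cc1))" by (simp add: c0_def)
            qed
          qed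
        qed
      qed
      then have "L K2 c0 c1" by simp
      moreover have "is_val c0" "is_val c1" by (auto simp: c0_def c1_def)
      ultimately have "EV K2 (Reset (opn b0 c0)) (Reset (opn b1 c1))" using body by blast
      then obtain n1 where n1: "rd\<^sup>*\<^sup>* (Reset (opn b1 c1)) n1" "nf n1" "L (K2 - d) n n1"
        using hd dK jn(3) unfolding EV_def by blast
      have "K2 - d = K - j" using K2 d jn(1) h(1) by simp
      moreover have "rd\<^sup>*\<^sup>* (Reset (plugE F1 s1)) n1"
        using rtranclp_trans[OF right1 converse_rtranclp_into_rtranclp[OF r1 n1(1)]] .
      ultimately show ?thesis using n1 by auto
    qed
  qed
qed


lemma eplug_val:
  assumes "evctx E0" "evctx E1" "EV K s0 s1" "\<forall>j m. (rd ^^ j) s0 m \<longrightarrow> nf m \<longrightarrow> is_val m"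
    "\<not> nf s0" "\<forall>i<K. Frel i E0 E1"
  shows "EV K (plugE E0 s0) (plugE E1 s1)"
  unfolding EV_def
proof (intro allI impI)
  fix j n assume jn: "j \<le> K" "(rd ^^ j) (plugE E0 s0) n" "nf n"
  obtain j1 m0 where h: "j1 \<le> j" "(rd ^^ j1) s0 m0" "nf m0" "(rd ^^ (j - j1)) (plugE E0 m0) n"
    using ctx_decomp[OF assms(1) jn(2,3)] by blast
  have "j1 \<noteq> 0" using h(2,3) assms(5) by (metis relpowp_0_E)
  have "j1 \<le> K" using h(1) jn(1) by simp
  from assms(3)[unfolded EV_def, rule_format, OF this h(2) h(3)]
  obtain m1 where m1: "rd\<^sup>*\<^sup>* s1 m1" "nf m1" "L (K - j1) m0 m1" by blast
  have v: "is_val m0" using assms(4) h(2,3) by blast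
  then have v1: "is_val m1" using L_val[OF m1(3) v] by auto
  have "K - j1 < K" using \<open>j1 \<noteq> 0\<close> \<open>j1 \<le> K\<close> by simp
  then have "Frel (K - j1) E0 E1" using assms(6) by simp
  then have "EV (K - j1) (plugE E0 m0) (plugE E1 m1)" using v v1 m1(3) unfolding Frel_def by blast
  moreover have "j - j1 \<le> K - j1" using h(1) jn(1) by simp
  ultimately obtain n1 where "rd\<^sup>*\<^sup>* (plugE E1 m1) n1" "nf n1" "L (K - j1 - (j - j1)) n n1"
    using h(4) jn(3) unfolding EV_def by blast
  moreover have "K - j1 - (j - j1) = K - j" using h(1) jn(1) by auto
  moreover have "rd\<^sup>*\<^sup>* (plugE E1 s1) (plugE E1 m1)" using star_ctx[OF m1(1) assms(2)] .
  ultimately show "\<exists>n1. rd\<^sup>*\<^sup>* (plugE E1 s1) n1 \<and> nf n1 \<and> L (K - j) n n1"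
    using rtranclp_trans by metis
qed

lemma reset_vals_cl: "cl s \<Longrightarrow> \<forall>j m. (rd ^^ j) (Reset s) m \<longrightarrow> nf m \<longrightarrow> is_val m"
  using reset_vals unfolding cl_def by blast

lemma reset_not_nf: "cl s \<Longrightarrow> \<not> nf (Reset s)"
proof
  assume a: "cl s" "nf (Reset s)"
  have "lc (Reset s)" "fv (Reset s) = {}" using a(1) by (auto simp: cl_def)
  then have "(\<exists>F b. pure F \<and> Reset s = plugE F (Shift b))" using closed_nf[of "Reset s"] a(2) by auto
  then show False using ctrl_not_Reset by metis
qed

lemma RFrel_Hole: "RFrel i Hole Hole"
  unfolding RFrel_def
proof (intro allI impI)
  fix v0 v1 assume a: "L i v0 v1" "is_val v0" "is_val v1"
  have c: "cl v0" "cl v1" using L_cl[OF a(1)] by auto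
  have r0: "rd (Reset v0) v0" using a c by (intro rd.rreset) (auto simp: cl_def)
  have r1: "rd (Reset v1) v1" using a c by (intro rd.rreset) (auto simp: cl_def)
  show "EV i (Reset (plugE Hole v0)) (Reset (plugE Hole v1))"
  proof (cases i)
    case 0
    then show ?thesis using EV_0_red r0 by auto
  next
    case (Suc i')
    have "EV i' v0 (Reset v1)"
      using EV_nf_intro[of v0 "Reset v1" v1 i'] a r1 L_mono[OF a(1), of i'] Suc by auto
    then show ?thesis using EV_back1[OF r0] Suc by simp
  qed
qed

lemma EV_reset: "EV K s0 s1 \<Longrightarrow> EV K (Reset s0) (Reset s1)"
  using rplug_lemma[of Hole Hole K s0 s1] RFrel_Hole by simp

lemma Frel_ApR:
  assumes "L i v0 v1" "is_val v0"
  shows "Frel i (ApR v0 Hole) (ApR v1 Hole)"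
  unfolding Frel_def
proof (intro allI impI)
  fix u0 u1 assume "L i u0 u1" "is_val u0" "is_val u1"
  then show "EV i (plugE (ApR v0 Hole) u0) (plugE (ApR v1 Hole) u1)"
    using EV_app[OF assms(1,2), of u0 u1] L_mono[of i u0 u1 "i - 1"] by simp
qed

lemma Frel_ApL:
  assumes "EV i c0 c1" "cl c0" "cl c1"
  shows "Frel i (ApL Hole c0) (ApL Hole c1)"
  unfolding Frel_def
proof (intro allI impI)
  fix v0 v1 assume a: "L i v0 v1" "is_val v0" "is_val v1"
  have c: "cl v0" "cl v1" using L_cl[OF a(1)] by auto
  have "\<forall>i'\<le>i. Frel i' (ApR v0 Hole) (ApR v1 Hole)"
    using Frel_ApR L_mono[OF a(1)] a(2) by blast
  then have "EV i (plugE (ApR v0 Hole) c0) (plugE (ApR v1 Hole) c1)"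
    using plug_lemma[of "ApR v0 Hole" "ApR v1 Hole" i c0 c1] assms a c by (auto simp: cl_def)
  then show "EV i (plugE (ApL Hole c0) v0) (plugE (ApL Hole c1) v1)" by simp
qed

lemma EV_app_compat:
  assumes "cl c0" "cl c1" "EV K a0 a1" "EV K c0 c1"
  shows "EV K (App a0 c0) (App a1 c1)"
proof -
  have "\<forall>i\<le>K. Frel i (ApL Hole c0) (ApL Hole c1)"
    using Frel_ApL EV_mono[OF assms(4)] assms(1,2) by blast
  then have "EV K (plugE (ApL Hole c0) a0) (plugE (ApL Hole c1) a1)"
    using plug_lemma[of "ApL Hole c0" "ApL Hole c1" K a0 a1] assms by (auto simp: cl_def)
  then show ?thesis by simp
qed


lemma plug_red:
  assumes "pure F0" "pure F1" "fvE F0 = {}" "fvE F1 = {}" "EV K s0 s1" "\<not> nf s0"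
    "\<forall>i<K. Frel i F0 F1"
  shows "EV K (plugE F0 s0) (plugE F1 s1)"
proof -
  obtain s0' where r: "rd s0 s0'" using assms(6) by blast
  have r': "rd (plugE F0 s0) (plugE F0 s0')" using rd_ctx[OF pure_evctx[OF assms(1)] r] .
  show ?thesis
  proof (cases K)
    case 0
    then show ?thesis using EV_0_red r' by blast
  next
    case (Suc K')
    have "EV K' s0' s1" using EV_fwd1[OF r] assms(5) Suc by simp
    moreover have "\<forall>i\<le>K'. Frel i F0 F1" using assms(7) Suc by simp
    ultimately have "EV K' (plugE F0 s0') (plugE F1 s1)" using plug_lemma assms(1-4) by blast
    then show ?thesis using EV_back1[OF r'] Suc by simp
  qed
qed

lemma rplug_red:
  assumes "pure F0" "pure F1" "fvE F0 = {}" "fvE F1 = {}" "EV K s0 s1" "\<not> nf s0"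
    "\<forall>i<K. RFrel i F0 F1"
  shows "EV K (Reset (plugE F0 s0)) (Reset (plugE F1 s1))"
proof -
  obtain s0' where r: "rd s0 s0'" using assms(6) by blast
  have r': "rd (Reset (plugE F0 s0)) (Reset (plugE F0 s0'))"
    using rd_ctx[OF pure_evctx[OF assms(1)] r] by (rule rd.rrst)
  show ?thesis
  proof (cases K)
    case 0
    then show ?thesis using EV_0_red r' by blast
  next
    case (Suc K')
    have "EV K' s0' s1" using EV_fwd1[OF r] assms(5) Suc by simp
    moreover have "\<forall>i\<le>K'. RFrel i F0 F1" using assms(7) Suc by simp
    ultimately have "EV K' (Reset (plugE F0 s0')) (Reset (plugE F1 s1))" using rplug_lemma assms(1-4) by blast
    then show ?thesis using EV_back1[OF r'] Suc by simp
  qed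
qed

definition grel :: "nat \<Rightarrow> (var \<Rightarrow> trm) \<Rightarrow> (var \<Rightarrow> trm) \<Rightarrow> var set \<Rightarrow> bool" where
  "grel k g0 g1 X \<longleftrightarrow> good g0 \<and> good g1 \<and> (\<forall>x\<in>X. L k (g0 x) (g1 x))"

lemma grel_mono: "grel k g0 g1 X \<Longrightarrow> i \<le> k \<Longrightarrow> Y \<subseteq> X \<Longrightarrow> grel i g0 g1 Y"
  unfolding grel_def using L_mono by blast

lemma grel_upd: "grel k g0 g1 X \<Longrightarrow> L k u0 u1 \<Longrightarrow> is_val u0 \<Longrightarrow> is_val u1 \<Longrightarrow>
   grel k (g0(z:=u0)) (g1(z:=u1)) (insert z X)"
  unfolding grel_def good_def using L_cl[of k u0 u1] by (auto simp: cl_def)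

lemma grel_cl: "grel k g0 g1 X \<Longrightarrow> x \<in> X \<Longrightarrow> cl (g0 x) \<and> cl (g1 x)"
  unfolding grel_def using L_cl by blast

lemma grel_good: "grel k g0 g1 X \<Longrightarrow> good g0 \<and> good g1"
  unfolding grel_def by blast

lemma msubst_cl0: "grel k g0 g1 X \<Longrightarrow> fv t \<subseteq> X \<Longrightarrow> lc t \<Longrightarrow> cl (msubst g0 t)"
  unfolding cl_def using grel_cl[of k g0 g1 X] grel_good[of k g0 g1 X]
  by (auto simp: fv_msubst cl_def intro: msubst_lc)

lemma msubst_cl1: "grel k g0 g1 X \<Longrightarrow> fv t \<subseteq> X \<Longrightarrow> lc t \<Longrightarrow> cl (msubst g1 t)"
  unfolding cl_def using grel_cl[of k g0 g1 X] grel_good[of k g0 g1 X]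
  by (auto simp: fv_msubst cl_def intro: msubst_lc)

lemma msubstE_cl0: "grel k g0 g1 X \<Longrightarrow> fvE E \<subseteq> X \<Longrightarrow> fvE (msubstE g0 E) = {}"
  using grel_cl[of k g0 g1 X] by (auto simp: fvE_msubstE cl_def)

lemma msubstE_cl1: "grel k g0 g1 X \<Longrightarrow> fvE E \<subseteq> X \<Longrightarrow> fvE (msubstE g1 E) = {}"
  using grel_cl[of k g0 g1 X] by (auto simp: fvE_msubstE cl_def)

lemma plugE_App_not_FV[simp]: "plugE E (App a b) \<noteq> FV y"
  by (cases E) auto

lemma compE_Rst_not_Hole[simp]: "compE E (Rst F) \<noteq> Hole"
  by (cases E) auto

lemma ctrl_not_AppFV: "pure F \<Longrightarrow> plugE F (Shift b) \<noteq> App (FV y) (FV z)"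
  by (cases F) auto

lemma plug_AppFV: "plugE E0 (App (FV x) v0) = App (FV y) (FV z) \<Longrightarrow> E0 = Hole \<and> x = y \<and> v0 = FV z"
  by (cases E0) auto

lemma ctx_rel_Hole: "ctx_rel Q Hole E1 \<Longrightarrow> pure E1 \<and> (\<exists>x. x \<notin> fvE E1 \<and> Q (FV x) (plugE E1 (FV x)))"
  unfolding ctx_rel_def by (metis compE_Rst_not_Hole empty_iff fvE.simps(1) plugE.simps(1) sup_bot_left)

lemma ctx_rel_pure: "pure F0 \<Longrightarrow> pure F1 \<Longrightarrow> ctx_rel Q F0 F1 \<Longrightarrow>
   \<exists>x. x \<notin> fvE F0 \<union> fvE F1 \<and> Q (plugE F0 (FV x)) (plugE F1 (FV x))"
  unfolding ctx_rel_def by auto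

lemma os_var:
  assumes "nf_rel Q (App (FV y) (FV z)) n1"
  shows "\<exists>E1 v1 x. n1 = plugE E1 (App (FV y) v1) \<and> evctx E1 \<and> pure E1 \<and> x \<notin> fvE E1 \<and>
     Q (FV x) (plugE E1 (FV x)) \<and> val_rel Q (FV z) v1"
proof -
  have "\<not> val_rel Q (App (FV y) (FV z)) n1" by (simp add: val_rel_def)
  moreover have "\<not> (\<exists>F0 b0. pure F0 \<and> App (FV y) (FV z) = plugE F0 (Shift b0))"
    using ctrl_not_AppFV by metis
  ultimately obtain E0 E1 x v0 v1 where h: "evctx E0" "evctx E1"
     "App (FV y) (FV z) = plugE E0 (App (FV x) v0)" "n1 = plugE E1 (App (FV x) v1)"
     "ctx_rel Q E0 E1" "val_rel Q v0 v1"
    using assms unfolding nf_rel_def by blast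
  have "E0 = Hole" "x = y" "v0 = FV z" using plug_AppFV[OF h(3)[symmetric]] by auto
  then show ?thesis using h ctx_rel_Hole[of Q E1] by blast
qed

lemma val_rel_conv: "val_rel (\<lambda>a b. Q b a) v0 v1 \<longleftrightarrow> val_rel Q v1 v0"
  unfolding val_rel_def by blast

lemma nf_AppFV: "nf (App (FV y) (FV z))"
  by (auto elim: rd_AppE)


lemma lc_open_FV_inv: "lc_at k (open_at k (FV z) b) \<Longrightarrow> lc_at (Suc k) b"
  by (induction b arbitrary: k) (auto split: if_splits)

lemma val_Lam_or_FV: "is_val v \<Longrightarrow> (\<exists>y. v = FV y) \<or> (\<exists>a. v = Lam a)"
  by (cases v) auto

lemma msubst_val_Lam:
  assumes "is_val m" "grel k g0 g1 X" "fv m \<subseteq> X" "lc m"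
  shows "(\<exists>b. msubst g0 m = Lam b) \<and> (\<exists>b. msubst g1 m = Lam b)"
proof -
  have c: "cl (msubst g0 m)" "cl (msubst g1 m)" using msubst_cl0 msubst_cl1 assms by blast+
  have v: "is_val (msubst g0 m)" "is_val (msubst g1 m)"
    using is_val_msubst assms(1) grel_good[OF assms(2)] by auto
  show ?thesis using c v
    by (cases "msubst g0 m"; cases "msubst g1 m") (auto simp: cl_def)
qed

lemma msubst_upd_open:
  "good g \<Longrightarrow> z \<notin> fv a \<Longrightarrow> msubst (g(z:=u)) (opn a (FV z)) = opn (msubst g a) u"
  using open_msubst_fresh[of z a g 0 u] unfolding good_def by simp

locale bisim =
  fixes R :: "trm \<Rightarrow> trm \<Rightarrow> bool"
  assumes bis: "nf_bisim R"
begin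

lemma R_lc: "R t0 t1 \<Longrightarrow> lc t0 \<and> lc t1"
  using bis unfolding nf_bisim_def by blast

lemma sim: "R t0 t1 \<Longrightarrow> rd\<^sup>*\<^sup>* t0 m0 \<Longrightarrow> nf m0 \<Longrightarrow> \<exists>m1. rd\<^sup>*\<^sup>* t1 m1 \<and> nf m1 \<and> nf_rel R m0 m1"
  using bis unfolding nf_bisim_def nf_sim_def eval_ev by blast

lemma simc: "R t0 t1 \<Longrightarrow> rd\<^sup>*\<^sup>* t1 m1 \<Longrightarrow> nf m1 \<Longrightarrow>
   \<exists>m0. rd\<^sup>*\<^sup>* t0 m0 \<and> nf m0 \<and> nf_rel (\<lambda>a b. R b a) m1 m0"
proof -
  assume a: "R t0 t1" "rd\<^sup>*\<^sup>* t1 m1" "nf m1"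
  have "nf_sim (\<lambda>a b. R b a)" using bis unfolding nf_bisim_def by blast
  then show ?thesis using a unfolding nf_sim_def eval_ev by blast
qed

lemma val_rel_lc: "val_rel R m0 m1 \<Longrightarrow> lc m0 \<and> lc m1"
proof -
  assume "val_rel R m0 m1"
  then obtain z where v: "is_val m0" "is_val m1" "R (app_at m0 z) (app_at m1 z)"
    unfolding val_rel_def by blast
  then have l: "lc (app_at m0 z)" "lc (app_at m1 z)" using R_lc by auto
  show ?thesis using v l
    by (cases m0; cases m1) (auto intro: lc_open_FV_inv)
qed

lemma valFV: "val_rel R (FV y) (FV y') \<Longrightarrow> y = y'"
proof -
  assume "val_rel R (FV y) (FV y')"
  then obtain z where "R (App (FV y) (FV z)) (App (FV y') (FV z))"
    unfolding val_rel_def by auto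
  then obtain m1 where m1: "rd\<^sup>*\<^sup>* (App (FV y') (FV z)) m1" "nf m1" "nf_rel R (App (FV y) (FV z)) m1"
    using sim nf_AppFV by blast
  have "m1 = App (FV y') (FV z)" using m1(1) nf_AppFV
    by (metis converse_rtranclpE)
  then obtain E1 v1 where "App (FV y') (FV z) = plugE E1 (App (FV y) v1)"
    using os_var[OF m1(3)] by metis
  then show ?thesis using plug_AppFV by metis
qed

definition FT :: "nat \<Rightarrow> bool" where
  "FT K \<longleftrightarrow> (\<forall>t0 t1 g0 g1. R t0 t1 \<longrightarrow> grel K g0 g1 (fv t0 \<union> fv t1) \<longrightarrow>
      EV K (msubst g0 t0) (msubst g1 t1))"

definition VR :: "nat \<Rightarrow> bool" where
  "VR K \<longleftrightarrow> (\<forall>m0 m1 g0 g1. val_rel R m0 m1 \<longrightarrow> grel K g0 g1 (fv m0 \<union> fv m1) \<longrightarrow>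
      L K (msubst g0 m0) (msubst g1 m1))"

end


context bisim begin

lemma VR_FL:
  assumes FTi: "\<forall>i<Suc K'. FT i" and VRi: "\<forall>i<Suc K'. VR i"
    and vr: "val_rel R (FV y) (Lam a1)" and gr: "grel (Suc K') g0 g1 (fv (FV y) \<union> fv (Lam a1))"
    and b0: "g0 y = Lam b0'" and lu: "L K' u0 u1" "is_val u0" "is_val u1"
  shows "EV K' (opn b0' u0) (opn (msubst g1 a1) u1)"
proof -
  obtain z where z: "z \<notin> fv (FV y) \<union> fv (Lam a1)" "R (App (FV y) (FV z)) (opn a1 (FV z))"
    using vr unfolding val_rel_def by auto
  have lca1: "lc (opn a1 (FV z))" using R_lc z(2) by blast
  obtain t1' where t1': "rd\<^sup>*\<^sup>* (opn a1 (FV z)) t1'" "nf t1'" "nf_rel R (App (FV y) (FV z)) t1'"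
    using sim[OF z(2)] nf_AppFV by blast
  obtain E1 v1 x where E: "t1' = plugE E1 (App (FV y) v1)" "evctx E1" "pure E1" "x \<notin> fvE E1"
     "R (FV x) (plugE E1 (FV x))" "val_rel R (FV z) v1"
    using os_var[OF t1'(3)] by blast
  define X where "X = insert z (fv (FV y) \<union> fv (Lam a1))"
  define g0' where "g0' = g0(z:=u0)"
  define g1' where "g1' = g1(z:=u1)"
  have gr': "grel K' g0' g1' X"
    unfolding X_def g0'_def g1'_def using grel_upd[OF grel_mono[OF gr] lu] by simp
  have gd: "good g0" "good g1" "good g0'" "good g1'" using grel_good gr gr' by blast+
  have fvt1: "fv t1' \<subseteq> X" using star_fv[OF t1'(1)] fv_open[of 0 "FV z" a1] unfolding X_def by auto
  have fvE1: "fvE E1 \<subseteq> X" "fv v1 \<subseteq> X" "y \<in> X" using fvt1 E(1) by (auto simp: fv_plugE X_def)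
  have yz: "y \<noteq> z" using z(1) by simp
  define E1' where "E1' = msubstE g1' E1"
  have pE1': "pure E1'" using pure_msubstE E(3) gd unfolding E1'_def by blast
  have cE1': "fvE E1' = {}" using msubstE_cl1[OF gr' fvE1(1)] unfolding E1'_def .
  have eq1: "msubst g1' t1' = plugE E1' (App (g1 y) (msubst g1' v1))"
    using E(1) yz by (simp add: msubst_plugE E1'_def g1'_def)
  have za1: "z \<notin> fv a1" using z(1) by simp
  have right: "rd\<^sup>*\<^sup>* (opn (msubst g1 a1) u1) (plugE E1' (App (g1 y) (msubst g1' v1)))"
    using star_subst[OF t1'(1) gd(4)] eq1 msubst_upd_open[OF gd(2) za1] unfolding g1'_def by simp
  have "VR K'" using VRi by simp
  moreover have "grel K' g0' g1' (fv (FV z) \<union> fv v1)" using grel_mono[OF gr' order.refl] fvE1(2)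
    unfolding X_def by auto
  ultimately have Lv: "L K' u0 (msubst g1' v1)" using E(6) unfolding VR_def g0'_def by fastforce
  have Ly: "L (Suc K') (g0 y) (g1 y)" using gr unfolding grel_def by simp
  have vy: "is_val (g0 y)" using gd unfolding good_def by blast
  have ev1: "EV (Suc K') (App (g0 y) u0) (App (g1 y) (msubst g1' v1))"
    using EV_app[OF Ly vy, of u0 "msubst g1' v1"] Lv lu(2) by simp
  have cu: "cl u0" "cl u1" using L_cl[OF lu(1)] by auto
  have r0: "rd (App (g0 y) u0) (opn b0' u0)" unfolding b0
    using b0 gd lu cu unfolding good_def cl_def by (intro rd.rbeta) (metis, auto)
  have Fr: "\<forall>i<Suc K'. Frel i Hole E1'"
  proof (intro allI impI)
    fix i assume i: "i < Suc K'"
    show "Frel i Hole E1'" unfolding Frel_def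
    proof (intro allI impI)
      fix w0 w1 assume w: "L i w0 w1" "is_val w0" "is_val w1"
      have "FT i" using FTi i by simp
      have "grel i g0' g1' X" using grel_mono[OF gr', of i X] i by simp
      then have "grel i (g0'(x:=w0)) (g1'(x:=w1)) (insert x X)" using grel_upd w by blast
      moreover have "fv (FV x) \<union> fv (plugE E1 (FV x)) \<subseteq> insert x X" using fvE1(1) by (auto simp: fv_plugE)
      ultimately have "grel i (g0'(x:=w0)) (g1'(x:=w1)) (fv (FV x) \<union> fv (plugE E1 (FV x)))"
        using grel_mono by blast
      moreover have "FT i" using FTi i by simp
      ultimately have "EV i (msubst (g0'(x:=w0)) (FV x)) (msubst (g1'(x:=w1)) (plugE E1 (FV x)))"
        using E(5) unfolding FT_def by blast
      moreover have "msubstE (g1'(x:=w1)) E1 = E1'"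
        unfolding E1'_def using E(4) by (intro msubstE_cong) auto
      ultimately show "EV i (plugE Hole w0) (plugE E1' w1)" by (simp add: msubst_plugE)
    qed
  qed
  have "EV (Suc K') (plugE Hole (App (g0 y) u0)) (plugE E1' (App (g1 y) (msubst g1' v1)))"
    using plug_red[of Hole E1' "Suc K'" "App (g0 y) u0" "App (g1 y) (msubst g1' v1)"] pE1' cE1' ev1 r0 Fr
    by auto
  then have "EV K' (opn b0' u0) (plugE E1' (App (g1 y) (msubst g1' v1)))" using EV_fwd1[OF r0] by simp
  then show ?thesis using EV_right[OF right] by blast
qed

end


context bisim begin

lemma VR_LF:
  assumes FTi: "\<forall>i<Suc K'. FT i" and VRi: "\<forall>i<Suc K'. VR i"
    and vr: "val_rel R (Lam a0) (FV y)" and gr: "grel (Suc K') g0 g1 (fv (Lam a0) \<union> fv (FV y))"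
    and b1: "g1 y = Lam b1'" and lu: "L K' u0 u1" "is_val u0" "is_val u1"
  shows "EV K' (opn (msubst g0 a0) u0) (opn b1' u1)"
proof -
  obtain z where z: "z \<notin> fv (Lam a0) \<union> fv (FV y)" "R (opn a0 (FV z)) (App (FV y) (FV z))"
    using vr unfolding val_rel_def by auto
  obtain t0' where t0': "rd\<^sup>*\<^sup>* (opn a0 (FV z)) t0'" "nf t0'" "nf_rel (\<lambda>a b. R b a) (App (FV y) (FV z)) t0'"
    using simc[OF z(2)] nf_AppFV by blast
  obtain E0 v0 x where E: "t0' = plugE E0 (App (FV y) v0)" "evctx E0" "pure E0" "x \<notin> fvE E0"
     "R (plugE E0 (FV x)) (FV x)" "val_rel (\<lambda>a b. R b a) (FV z) v0"
    using os_var[OF t0'(3)] by blast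
  have vr0: "val_rel R v0 (FV z)" using E(6) val_rel_conv by blast
  have lct0: "lc t0'" using star_lc[OF t0'(1)] R_lc z(2) by blast
  have lcv0: "lc v0" using lct0 E(1) lc_plugE_inner by fastforce
  define X where "X = insert z (fv (Lam a0) \<union> fv (FV y))"
  define g0' where "g0' = g0(z:=u0)"
  define g1' where "g1' = g1(z:=u1)"
  have gr': "grel K' g0' g1' X"
    unfolding X_def g0'_def g1'_def using grel_upd[OF grel_mono[OF gr] lu] by simp
  have gd: "good g0" "good g1" "good g0'" "good g1'" using grel_good gr gr' by blast+
  have fvt0: "fv t0' \<subseteq> X" using star_fv[OF t0'(1)] fv_open[of 0 "FV z" a0] unfolding X_def by auto
  have fvE0: "fvE E0 \<subseteq> X" "fv v0 \<subseteq> X" "y \<in> X" using fvt0 E(1) by (auto simp: fv_plugE X_def)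
  have yz: "y \<noteq> z" using z(1) by simp
  define E0' where "E0' = msubstE g0' E0"
  have pE0': "pure E0'" using pure_msubstE E(3) gd unfolding E0'_def by blast
  have cE0': "fvE E0' = {}" using msubstE_cl0[OF gr' fvE0(1)] unfolding E0'_def .
  have eq0: "msubst g0' t0' = plugE E0' (App (g0 y) (msubst g0' v0))"
    using E(1) yz by (simp add: msubst_plugE E0'_def g0'_def)
  have za0: "z \<notin> fv a0" using z(1) by simp
  obtain j' where j': "(rd ^^ j') (opn (msubst g0 a0) u0) (plugE E0' (App (g0 y) (msubst g0' v0)))"
    using rtranclp_imp_relpowp[OF t0'(1)] pow_subst[of _ "opn a0 (FV z)" t0' g0'] gd(3) eq0
      msubst_upd_open[OF gd(1) za0] unfolding g0'_def by metis
  define K2 where "K2 = K' - j'"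
  have K2le: "K2 \<le> K'" unfolding K2_def by simp
  have "VR (K2 - 1)" using VRi K2le by simp
  moreover have "grel (K2 - 1) g0' g1' (fv v0 \<union> fv (FV z))" using grel_mono[OF gr'] fvE0(2) K2le
    unfolding X_def by auto
  ultimately have Lv: "L (K2 - 1) (msubst g0' v0) u1" using vr0 unfolding VR_def g1'_def by fastforce
  have "L (Suc K') (g0 y) (g1 y)" using gr unfolding grel_def by simp
  then have Ly: "L K2 (g0 y) (g1 y)" using K2le L_mono by simp
  have vy: "is_val (g0 y)" using gd unfolding good_def by blast
  have vv: "is_val (msubst g0' v0)" using L_val'[OF Lv] lu(3) by auto
  have ev1: "EV K2 (App (g0 y) (msubst g0' v0)) (App (g1 y) u1)"
    using EV_app[OF Ly vy Lv vv] .
  have cy: "cl (g0 y)" "cl (g1 y)" using grel_cl[OF gr] by auto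
  obtain c0 where c0: "g0 y = Lam c0" using msubst_val_Lam[of "FV y" 0 g0 g1 "{y}"] cy vy
    by (cases "g0 y") (auto simp: cl_def)
  have lcv: "lc (msubst g0' v0)" using msubst_lc lcv0 gd(3) by blast
  have nr: "\<not> nf (App (g0 y) (msubst g0' v0))"
    using rd.rbeta[of c0 "msubst g0' v0"] cy c0 vv lcv by (auto simp: cl_def)
  have cu: "cl u0" "cl u1" using L_cl[OF lu(1)] by auto
  have r1: "rd (App (g1 y) u1) (opn b1' u1)" unfolding b1
    using b1 cy lu cu unfolding cl_def by (intro rd.rbeta) auto
  have Fr: "\<forall>i<K2. Frel i E0' Hole"
  proof (intro allI impI)
    fix i assume i: "i < K2"
    show "Frel i E0' Hole" unfolding Frel_def
    proof (intro allI impI)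
      fix w0 w1 assume w: "L i w0 w1" "is_val w0" "is_val w1"
      have "grel i g0' g1' X" using grel_mono[OF gr', of i X] i K2le by simp
      then have "grel i (g0'(x:=w0)) (g1'(x:=w1)) (insert x X)" using grel_upd w by blast
      moreover have "fv (plugE E0 (FV x)) \<union> fv (FV x) \<subseteq> insert x X" using fvE0(1) by (auto simp: fv_plugE)
      ultimately have "grel i (g0'(x:=w0)) (g1'(x:=w1)) (fv (plugE E0 (FV x)) \<union> fv (FV x))"
        using grel_mono by blast
      moreover have "FT i" using FTi i K2le by simp
      ultimately have "EV i (msubst (g0'(x:=w0)) (plugE E0 (FV x))) (msubst (g1'(x:=w1)) (FV x))"
        using E(5) unfolding FT_def by blast
      moreover have "msubstE (g0'(x:=w0)) E0 = E0'"
        unfolding E0'_def using E(4) by (intro msubstE_cong) auto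
      ultimately show "EV i (plugE E0' w0) (plugE Hole w1)" by (simp add: msubst_plugE)
    qed
  qed
  have "EV K2 (plugE E0' (App (g0 y) (msubst g0' v0))) (plugE Hole (App (g1 y) u1))"
    using plug_red[of E0' Hole K2 "App (g0 y) (msubst g0' v0)" "App (g1 y) u1"] pE0' cE0' ev1 nr Fr
    by auto
  then have "EV K2 (plugE E0' (App (g0 y) (msubst g0' v0))) (opn b1' u1)"
    using EV_right_fwd[OF r1] by simp
  then show ?thesis using EV_back[OF j'] unfolding K2_def by blast
qed

lemma VR_step:
  assumes FTi: "\<forall>i<K. FT i" and VRi: "\<forall>i<K. VR i"
  shows "VR K"
  unfolding VR_def
proof (intro allI impI)
  fix m0 m1 g0 g1 assume vr: "val_rel R m0 m1" and gr: "grel K g0 g1 (fv m0 \<union> fv m1)"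
  have v: "is_val m0" "is_val m1" using vr unfolding val_rel_def by auto
  have lcm: "lc m0" "lc m1" using val_rel_lc[OF vr] by auto
  have c: "cl (msubst g0 m0)" "cl (msubst g1 m1)"
    using msubst_cl0[OF gr _ lcm(1)] msubst_cl1[OF gr _ lcm(2)] by auto
  obtain a0' where a0': "msubst g0 m0 = Lam a0'"
    using msubst_val_Lam[OF v(1) gr _ lcm(1)] by auto
  obtain a1' where a1': "msubst g1 m1 = Lam a1'"
    using msubst_val_Lam[OF v(2) gr _ lcm(2)] by auto
  show "L K (msubst g0 m0) (msubst g1 m1)"
  proof (cases K)
    case 0
    then show ?thesis using c a0' a1' by (simp add: L.simps(1))
  next
    case (Suc K')
    have LK': "L K' (msubst g0 m0) (msubst g1 m1)"
      using VRi Suc vr grel_mono[OF gr] unfolding VR_def by simp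
    show ?thesis unfolding Suc L_Suc
    proof (intro conjI allI impI)
      show "L K' (msubst g0 m0) (msubst g1 m1)" using LK' .
    next
      fix b0 b1 u0 u1
      assume a: "msubst g0 m0 = Lam b0" "msubst g1 m1 = Lam b1" "L K' u0 u1" "is_val u0" "is_val u1"
      have FTs: "\<forall>i<Suc K'. FT i" and VRs: "\<forall>i<Suc K'. VR i" using FTi VRi Suc by auto
      have grs: "grel (Suc K') g0 g1 (fv m0 \<union> fv m1)" using gr Suc by simp
      show "EV K' (opn b0 u0) (opn b1 u1)"
      proof (cases "\<exists>y. m0 = FV y")
        case True
        then obtain y where y: "m0 = FV y" by blast
        show ?thesis
        proof (cases "\<exists>y'. m1 = FV y'")
          case True
          then obtain y' where y': "m1 = FV y'" by blast
          have "y = y'" using valFV vr y y' by simp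
          then have "L (Suc K') (g0 y) (g1 y)" using grs y unfolding grel_def by simp
          then show ?thesis using L_lam_app a y y' \<open>y = y'\<close> by simp
        next
          case False
          then obtain a1 where m1: "m1 = Lam a1" using val_Lam_or_FV v(2) by blast
          have "b1 = msubst g1 a1" using a(2) m1 by simp
          then show ?thesis using VR_FL[OF FTs VRs, of y a1 g0 g1 b0 u0 u1] vr grs a y m1 by simp
        qed
      next
        case False
        then obtain a0 where m0: "m0 = Lam a0" using val_Lam_or_FV v(1) by blast
        have b0: "b0 = msubst g0 a0" using a(1) m0 by simp
        show ?thesis
        proof (cases "\<exists>y'. m1 = FV y'")
          case True
          then obtain y where y: "m1 = FV y" by blast
          then show ?thesis using VR_LF[OF FTs VRs, of a0 y g0 g1 b1 u0 u1] vr grs a b0 m0 by simp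
        next
          case False
          then obtain a1 where m1: "m1 = Lam a1" using val_Lam_or_FV v(2) by blast
          have b1: "b1 = msubst g1 a1" using a(2) m1 by simp
          obtain z where z: "z \<notin> fv m0 \<union> fv m1" "R (app_at m0 z) (app_at m1 z)"
            using vr unfolding val_rel_def by blast
          have Rz: "R (opn a0 (FV z)) (opn a1 (FV z))" using z m0 m1 by simp
          have "grel K' (g0(z:=u0)) (g1(z:=u1)) (insert z (fv m0 \<union> fv m1))"
            using grel_upd[OF grel_mono[OF grs] a(3-5)] by simp
          moreover have "fv (opn a0 (FV z)) \<union> fv (opn a1 (FV z)) \<subseteq> insert z (fv m0 \<union> fv m1)"
            using fv_open[of 0 "FV z" a0] fv_open[of 0 "FV z" a1] m0 m1 by auto
          ultimately have "grel K' (g0(z:=u0)) (g1(z:=u1)) (fv (opn a0 (FV z)) \<union> fv (opn a1 (FV z)))"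
            using grel_mono by blast
          moreover have "FT K'" using FTi Suc by simp
          ultimately have "EV K' (msubst (g0(z:=u0)) (opn a0 (FV z))) (msubst (g1(z:=u1)) (opn a1 (FV z)))"
            using Rz unfolding FT_def by blast
          moreover have "z \<notin> fv a0" "z \<notin> fv a1" using z(1) m0 m1 by auto
          ultimately show ?thesis using msubst_upd_open grel_good[OF gr] b0 b1 by simp
        qed
      qed
    next
      fix F0 b0 F1 b1 assume "pure F0" "pure F1" "msubst g0 m0 = plugE F0 (Shift b0)"
      then show "Frel K' F0 F1" using a0' by simp
    next
      fix F0 b0 F1 b1 c0 c1 assume "pure F0" "pure F1" "msubst g0 m0 = plugE F0 (Shift b0)"
      then show "EV K' (Reset (opn b0 c0)) (Reset (opn b1 c1))" using a0' by simp
    qed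
  qed
qed

end


lemma msubst_plug_upd: "x \<notin> fvE A \<Longrightarrow> msubst (g(x:=w)) (plugE A (FV x)) = plugE (msubstE g A) w"
proof -
  assume a: "x \<notin> fvE A"
  have "msubstE (g(x:=w)) A = msubstE g A" using a by (intro msubstE_cong) auto
  then show ?thesis by (simp add: msubst_plugE)
qed

context bisim begin

lemma FT_inst:
  assumes "FT i" "R s0 s1" "grel i g0 g1 X" "fv s0 \<union> fv s1 \<subseteq> insert x X" "L i w0 w1" "is_val w0" "is_val w1"
  shows "EV i (msubst (g0(x:=w0)) s0) (msubst (g1(x:=w1)) s1)"
proof -
  have "grel i (g0(x:=w0)) (g1(x:=w1)) (insert x X)" using grel_upd assms(3,5-7) by blast
  then have "grel i (g0(x:=w0)) (g1(x:=w1)) (fv s0 \<union> fv s1)" using grel_mono assms(4) by blast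
  then show ?thesis using assms(1,2) unfolding FT_def by blast
qed

lemma FT_ctrl:
  assumes FTi: "\<forall>i<K1. FT i"
    and pF: "pure F0" "pure F1" and cr: "ctx_rel R F0 F1"
    and k: "k \<notin> fv (plugE F0 (Shift b0)) \<union> fv (plugE F1 (Shift b1))"
    and Rk: "R (Reset (opn b0 (FV k))) (Reset (opn b1 (FV k)))"
    and gr: "grel K1 g0 g1 X" and X: "fv (plugE F0 (Shift b0)) \<union> fv (plugE F1 (Shift b1)) \<subseteq> X"
    and lcm: "lc (plugE F0 (Shift b0))" "lc (plugE F1 (Shift b1))"
  shows "L K1 (plugE (msubstE g0 F0) (Shift (msubst g0 b0))) (plugE (msubstE g1 F1) (Shift (msubst g1 b1)))"
proof -
  obtain x where x: "x \<notin> fvE F0 \<union> fvE F1" "R (plugE F0 (FV x)) (plugE F1 (FV x))"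
    using ctx_rel_pure[OF pF cr] by blast
  have gd: "good g0" "good g1" using grel_good[OF gr] by auto
  define F0' where "F0' = msubstE g0 F0"
  define F1' where "F1' = msubstE g1 F1"
  have pF': "pure F0'" "pure F1'" using pure_msubstE pF gd unfolding F0'_def F1'_def by auto
  have cl0: "cl (plugE F0' (Shift (msubst g0 b0)))" "cl (plugE F1' (Shift (msubst g1 b1)))"
    using msubst_cl0[OF gr _ lcm(1)] msubst_cl1[OF gr _ lcm(2)] X
    by (auto simp: msubst_plugE F0'_def F1'_def)
  have fvs: "fvE F0 \<subseteq> X" "fvE F1 \<subseteq> X" "fv b0 \<subseteq> X" "fv b1 \<subseteq> X" using X by (auto simp: fv_plugE)
  have kb: "k \<notin> fv b0" "k \<notin> fv b1" using k by (auto simp: fv_plugE)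
  have "\<forall>i. i \<le> K1 \<longrightarrow> L i (plugE F0' (Shift (msubst g0 b0))) (plugE F1' (Shift (msubst g1 b1)))"
  proof (intro allI)
    fix i show "i \<le> K1 \<longrightarrow> L i (plugE F0' (Shift (msubst g0 b0))) (plugE F1' (Shift (msubst g1 b1)))"
    proof (induction i)
      case 0
      have "\<exists>F0'' b0' F1'' b1'. pure F0'' \<and> pure F1'' \<and>
             plugE F0' (Shift (msubst g0 b0)) = plugE F0'' (Shift b0') \<and>
             plugE F1' (Shift (msubst g1 b1)) = plugE F1'' (Shift b1')"
        by (rule exI[of _ F0'], rule exI[of _ "msubst g0 b0"], rule exI[of _ F1'],
            rule exI[of _ "msubst g1 b1"]) (simp add: pF')
      then show ?case using cl0 by (simp add: L.simps(1))
    next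
      case (Suc i)
      show ?case
      proof
        assume si: "Suc i \<le> K1"
        have Li: "L i (plugE F0' (Shift (msubst g0 b0))) (plugE F1' (Shift (msubst g1 b1)))"
          using Suc si by simp
        have FTi': "FT i" using FTi si by simp
        have gri: "grel i g0 g1 X" using grel_mono[OF gr] si by simp
        have FR: "Frel i F0' F1'" unfolding Frel_def
        proof (intro allI impI)
          fix w0 w1 assume w: "L i w0 w1" "is_val w0" "is_val w1"
          have "fv (plugE F0 (FV x)) \<union> fv (plugE F1 (FV x)) \<subseteq> insert x X" using fvs by (auto simp: fv_plugE)
          from FT_inst[OF FTi' x(2) gri this w]
          show "EV i (plugE F0' w0) (plugE F1' w1)"
            using x(1) by (simp add: msubst_plug_upd F0'_def F1'_def)
        qed
        have BD: "\<forall>c0 c1. L i c0 c1 \<longrightarrow> is_val c0 \<longrightarrow> is_val c1 \<longrightarrow>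
            EV i (Reset (opn (msubst g0 b0) c0)) (Reset (opn (msubst g1 b1) c1))"
        proof (intro allI impI)
          fix c0 c1 assume w: "L i c0 c1" "is_val c0" "is_val c1"
          have "fv (Reset (opn b0 (FV k))) \<union> fv (Reset (opn b1 (FV k))) \<subseteq> insert k X"
            using fvs fv_open[of 0 "FV k" b0] fv_open[of 0 "FV k" b1] by auto
          from FT_inst[OF FTi' Rk gri this w]
          show "EV i (Reset (opn (msubst g0 b0) c0)) (Reset (opn (msubst g1 b1) c1))"
            using msubst_upd_open[OF gd(1) kb(1)] msubst_upd_open[OF gd(2) kb(2)] by simp
        qed
        show "L (Suc i) (plugE F0' (Shift (msubst g0 b0))) (plugE F1' (Shift (msubst g1 b1)))"
          unfolding L_Suc
        proof (intro conjI allI impI)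
          show "L i (plugE F0' (Shift (msubst g0 b0))) (plugE F1' (Shift (msubst g1 b1)))" using Li .
        next
          fix b0' b1' u0 u1
          assume "plugE F0' (Shift (msubst g0 b0)) = Lam b0'"
          then show "EV i (opn b0' u0) (opn b1' u1)" by simp
        next
          fix F0'' b0' F1'' b1'
          assume a: "pure F0''" "pure F1''" "plugE F0' (Shift (msubst g0 b0)) = plugE F0'' (Shift b0')"
            "plugE F1' (Shift (msubst g1 b1)) = plugE F1'' (Shift b1')"
          have "F0' = F0''" "F1' = F1''"
            using plugF_inj[OF pF'(1) a(1) a(3)] plugF_inj[OF pF'(2) a(2) a(4)] by auto
          then show "Frel i F0'' F1''" using FR by simp
        next
          fix F0'' b0' F1'' b1' c0 c1
          assume a: "pure F0''" "pure F1''" "plugE F0' (Shift (msubst g0 b0)) = plugE F0'' (Shift b0')"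
            "plugE F1' (Shift (msubst g1 b1)) = plugE F1'' (Shift b1')" "L i c0 c1" "is_val c0" "is_val c1"
          have "msubst g0 b0 = b0'" "msubst g1 b1 = b1'"
            using plugF_inj[OF pF'(1) a(1) a(3)] plugF_inj[OF pF'(2) a(2) a(4)] by auto
          then show "EV i (Reset (opn b0' c0)) (Reset (opn b1' c1))" using BD a(5-7) by simp
        qed
      qed
    qed
  qed
  then show ?thesis unfolding F0'_def F1'_def by simp
qed

end


context bisim begin

lemma FT_open:
  assumes FTi: "\<forall>i<K1. FT i" and VRi: "VR (K1 - 1)"
    and E: "evctx E0" "evctx E1" and cr: "ctx_rel R E0 E1" and vr: "val_rel R v0 v1"
    and gr: "grel K1 g0 g1 X"
    and X: "fv (plugE E0 (App (FV y) v0)) \<union> fv (plugE E1 (App (FV y) v1)) \<subseteq> X"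
    and lcm: "lc (plugE E0 (App (FV y) v0))" "lc (plugE E1 (App (FV y) v1))"
  shows "EV K1 (msubst g0 (plugE E0 (App (FV y) v0))) (msubst g1 (plugE E1 (App (FV y) v1)))"
proof -
  have gd: "good g0" "good g1" using grel_good[OF gr] by auto
  have fvs: "y \<in> X" "fv v0 \<subseteq> X" "fv v1 \<subseteq> X" "fvE E0 \<subseteq> X" "fvE E1 \<subseteq> X"
    using X by (auto simp: fv_plugE)
  have Ly: "L K1 (g0 y) (g1 y)" using gr fvs(1) unfolding grel_def by blast
  have vy: "is_val (g0 y)" using gd unfolding good_def by blast
  have grv: "grel (K1 - 1) g0 g1 (fv v0 \<union> fv v1)" using grel_mono[OF gr] fvs by auto
  have Lv: "L (K1 - 1) (msubst g0 v0) (msubst g1 v1)" using VRi vr grv unfolding VR_def by blast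
  have vv: "is_val v0" "is_val v1" using vr unfolding val_rel_def by auto
  have vv0: "is_val (msubst g0 v0)" using is_val_msubst vv gd by blast
  define A0 where "A0 = App (g0 y) (msubst g0 v0)"
  define A1 where "A1 = App (g1 y) (msubst g1 v1)"
  have ev: "EV K1 A0 A1" using EV_app[OF Ly vy Lv vv0] unfolding A0_def A1_def .
  have lcv0: "lc v0" using lcm(1) lc_plugE_inner by fastforce
  have cy: "cl (g0 y)" using grel_cl[OF gr fvs(1)] by blast
  obtain c where c: "g0 y = Lam c" using cy vy by (cases "g0 y") (auto simp: cl_def)
  have nr: "\<not> nf A0"
    using rd.rbeta[of c "msubst g0 v0"] cy c vv0 msubst_lc[OF lcv0 gd(1)] by (auto simp: cl_def A0_def)
  have eq0: "msubst g0 (plugE E0 (App (FV y) v0)) = plugE (msubstE g0 E0) A0"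
    by (simp add: msubst_plugE A0_def)
  have eq1: "msubst g1 (plugE E1 (App (FV y) v1)) = plugE (msubstE g1 E1) A1"
    by (simp add: msubst_plugE A1_def)
  from cr[unfolded ctx_rel_def] show ?thesis
  proof (elim disjE exE conjE)
    fix E0' F0 E1' F1 x
    assume h: "E0 = compE E0' (Rst F0)" "E1 = compE E1' (Rst F1)" "pure F0" "pure F1"
      "x \<notin> fvE E0 \<union> fvE E1" "R (plugE E0' (FV x)) (plugE E1' (FV x))"
      "R (Reset (plugE F0 (FV x))) (Reset (plugE F1 (FV x)))"
    define F0' where "F0' = msubstE g0 F0"
    define F1' where "F1' = msubstE g1 F1"
    define E0'' where "E0'' = msubstE g0 E0'"
    define E1'' where "E1'' = msubstE g1 E1'"
    have pF': "pure F0'" "pure F1'" using pure_msubstE h(3,4) gd unfolding F0'_def F1'_def by auto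
    have fvs2: "fvE F0 \<subseteq> X" "fvE F1 \<subseteq> X" "fvE E0' \<subseteq> X" "fvE E1' \<subseteq> X"
      using fvs(4,5) h(1,2) by auto
    have cF': "fvE F0' = {}" "fvE F1' = {}"
      using msubstE_cl0[OF gr fvs2(1)] msubstE_cl1[OF gr fvs2(2)] unfolding F0'_def F1'_def by auto
    have xs: "x \<notin> fvE F0" "x \<notin> fvE F1" "x \<notin> fvE E0'" "x \<notin> fvE E1'" using h(1,2,5) by auto
    have RF: "\<forall>i<K1. RFrel i F0' F1'"
    proof (intro allI impI)
      fix i assume i: "i < K1"
      show "RFrel i F0' F1'" unfolding RFrel_def
      proof (intro allI impI)
        fix w0 w1 assume w: "L i w0 w1" "is_val w0" "is_val w1"
        have "FT i" using FTi i by simp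
        moreover have "grel i g0 g1 X" using grel_mono[OF gr] i by simp
        moreover have "fv (Reset (plugE F0 (FV x))) \<union> fv (Reset (plugE F1 (FV x))) \<subseteq> insert x X"
          using fvs2 by (auto simp: fv_plugE)
        ultimately have "EV i (msubst (g0(x:=w0)) (Reset (plugE F0 (FV x)))) (msubst (g1(x:=w1)) (Reset (plugE F1 (FV x))))"
          using FT_inst h(7) w by blast
        then show "EV i (Reset (plugE F0' w0)) (Reset (plugE F1' w1))"
          using msubst_plug_upd[OF xs(1)] msubst_plug_upd[OF xs(2)] unfolding F0'_def F1'_def by simp
      qed
    qed
    have evR: "EV K1 (Reset (plugE F0' A0)) (Reset (plugE F1' A1))"
      using rplug_red[OF pF' cF' ev nr RF] .
    have Fr: "\<forall>i<K1. Frel i E0'' E1''"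
    proof (intro allI impI)
      fix i assume i: "i < K1"
      show "Frel i E0'' E1''" unfolding Frel_def
      proof (intro allI impI)
        fix w0 w1 assume w: "L i w0 w1" "is_val w0" "is_val w1"
        have "FT i" using FTi i by simp
        moreover have "grel i g0 g1 X" using grel_mono[OF gr] i by simp
        moreover have "fv (plugE E0' (FV x)) \<union> fv (plugE E1' (FV x)) \<subseteq> insert x X"
          using fvs2 by (auto simp: fv_plugE)
        ultimately have "EV i (msubst (g0(x:=w0)) (plugE E0' (FV x))) (msubst (g1(x:=w1)) (plugE E1' (FV x)))"
          using FT_inst h(6) w by blast
        then show "EV i (plugE E0'' w0) (plugE E1'' w1)"
          using msubst_plug_upd[OF xs(3)] msubst_plug_upd[OF xs(4)] unfolding E0''_def E1''_def by simp
      qed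
    qed
    have eE: "evctx E0''" "evctx E1''" using E h(1,2) evctx_msubstE gd unfolding E0''_def E1''_def by auto
    have lcs: "lc (Reset (plugE F0 (App (FV y) v0)))"
      using lcm(1) h(1) lc_plugE_inner[of 0 E0' "Reset (plugE F0 (App (FV y) v0))"] by (simp add: plugE_compE)
    have "fv (Reset (plugE F0 (App (FV y) v0))) \<subseteq> X" using X h(1) by (auto simp: fv_plugE)
    then have cls: "cl (msubst g0 (Reset (plugE F0 (App (FV y) v0))))" using msubst_cl0[OF gr _ lcs] by blast
    have s0eq: "msubst g0 (Reset (plugE F0 (App (FV y) v0))) = Reset (plugE F0' A0)"
      by (simp add: msubst_plugE F0'_def A0_def)
    have cls': "cl (plugE F0' A0)" using cls s0eq by (simp add: cl_def)
    have "EV K1 (plugE E0'' (Reset (plugE F0' A0))) (plugE E1'' (Reset (plugE F1' A1)))"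
      using eplug_val[OF eE evR reset_vals_cl[OF cls'] reset_not_nf[OF cls'] Fr] .
    moreover have "plugE (msubstE g0 E0) A0 = plugE E0'' (Reset (plugE F0' A0))"
      using h(1) by (simp add: msubstE_compE plugE_compE E0''_def F0'_def)
    moreover have "plugE (msubstE g1 E1) A1 = plugE E1'' (Reset (plugE F1' A1))"
      using h(2) by (simp add: msubstE_compE plugE_compE E1''_def F1'_def)
    ultimately show ?thesis using eq0 eq1 by simp
  next
    fix x
    assume h: "pure E0" "pure E1" "x \<notin> fvE E0 \<union> fvE E1" "R (plugE E0 (FV x)) (plugE E1 (FV x))"
    have pE: "pure (msubstE g0 E0)" "pure (msubstE g1 E1)" using pure_msubstE h(1,2) gd by auto
    have cE: "fvE (msubstE g0 E0) = {}" "fvE (msubstE g1 E1) = {}"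
      using msubstE_cl0[OF gr fvs(4)] msubstE_cl1[OF gr fvs(5)] by auto
    have xs: "x \<notin> fvE E0" "x \<notin> fvE E1" using h(3) by auto
    have Fr: "\<forall>i<K1. Frel i (msubstE g0 E0) (msubstE g1 E1)"
    proof (intro allI impI)
      fix i assume i: "i < K1"
      show "Frel i (msubstE g0 E0) (msubstE g1 E1)" unfolding Frel_def
      proof (intro allI impI)
        fix w0 w1 assume w: "L i w0 w1" "is_val w0" "is_val w1"
        have "FT i" using FTi i by simp
        moreover have "grel i g0 g1 X" using grel_mono[OF gr] i by simp
        moreover have "fv (plugE E0 (FV x)) \<union> fv (plugE E1 (FV x)) \<subseteq> insert x X"
          using fvs by (auto simp: fv_plugE)
        ultimately have "EV i (msubst (g0(x:=w0)) (plugE E0 (FV x))) (msubst (g1(x:=w1)) (plugE E1 (FV x)))"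
          using FT_inst h(4) w by blast
        then show "EV i (plugE (msubstE g0 E0) w0) (plugE (msubstE g1 E1) w1)"
          using msubst_plug_upd[OF xs(1)] msubst_plug_upd[OF xs(2)] by simp
      qed
    qed
    show ?thesis using plug_red[OF pE cE ev nr Fr] eq0 eq1 by simp
  qed
qed

end


context bisim begin

lemma FT_nf:
  assumes FTi: "\<forall>i<K1. FT i" and VRi: "\<forall>i\<le>K1. VR i" and nfr: "nf_rel R m0 m1"
    and gr: "grel K1 g0 g1 (fv m0 \<union> fv m1)" and lcm: "lc m0" "lc m1"
  shows "EV K1 (msubst g0 m0) (msubst g1 m1)"
proof -
  have gd: "good g0" "good g1" using grel_good[OF gr] by auto
  from nfr[unfolded nf_rel_def] show ?thesis
  proof (elim disjE exE conjE)
    assume vr: "val_rel R m0 m1"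
    have L: "L K1 (msubst g0 m0) (msubst g1 m1)" using VRi vr gr unfolding VR_def by blast
    have vv: "is_val m0" "is_val m1" using vr unfolding val_rel_def by auto
    have "is_val (msubst g0 m0)" "is_val (msubst g1 m1)" using is_val_msubst vv gd by auto
    then show ?thesis using EV_nf_intro[OF _ rtranclp.rtrancl_refl _ L] by simp
  next
    fix F0 F1 b0 b1 k
    assume h: "pure F0" "pure F1" "m0 = plugE F0 (Shift b0)" "m1 = plugE F1 (Shift b1)"
      "ctx_rel R F0 F1" "k \<notin> fv m0 \<union> fv m1" "R (Reset (opn b0 (FV k))) (Reset (opn b1 (FV k)))"
    have L: "L K1 (plugE (msubstE g0 F0) (Shift (msubst g0 b0))) (plugE (msubstE g1 F1) (Shift (msubst g1 b1)))"
      using FT_ctrl[OF FTi h(1,2,5) _ h(7) gr] h(3,4,6) lcm by simp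
    have pF: "pure (msubstE g0 F0)" "pure (msubstE g1 F1)" using pure_msubstE h(1,2) gd by auto
    have nf0: "nf (plugE (msubstE g0 F0) (Shift (msubst g0 b0)))" using pF by simp
    have nf1: "nf (plugE (msubstE g1 F1) (Shift (msubst g1 b1)))" using pF by simp
    show ?thesis using EV_nf_intro[OF nf0 rtranclp.rtrancl_refl nf1 L] h(3,4) by (simp add: msubst_plugE)
  next
    fix E0 E1 x v0 v1
    assume h: "evctx E0" "evctx E1" "m0 = plugE E0 (App (FV x) v0)" "m1 = plugE E1 (App (FV x) v1)"
      "ctx_rel R E0 E1" "val_rel R v0 v1"
    have "VR (K1 - 1)" using VRi by simp
    then show ?thesis using FT_open[OF FTi _ h(1,2,5,6) gr] h(3,4) lcm by simp
  qed
qed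

lemma FT_step:
  assumes FTi: "\<forall>i<K. FT i" and VRi: "\<forall>i\<le>K. VR i"
  shows "FT K"
  unfolding FT_def
proof (intro allI impI)
  fix t0 t1 g0 g1 assume Rt: "R t0 t1" and gr: "grel K g0 g1 (fv t0 \<union> fv t1)"
  have gd: "good g0" "good g1" using grel_good[OF gr] by auto
  have lct: "lc t0" "lc t1" using R_lc[OF Rt] by auto
  show "EV K (msubst g0 t0) (msubst g1 t1)" unfolding EV_def
  proof (intro allI impI)
    fix j n assume jn: "j \<le> K" "(rd ^^ j) (msubst g0 t0) n" "nf n"
    obtain j1 m0 where h: "j1 \<le> j" "(rd ^^ j1) t0 m0" "nf m0" "(rd ^^ (j - j1)) (msubst g0 m0) n"
      using subst_decomp[OF gd(1) jn(2,3)] by blast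
    obtain m1 where m1: "rd\<^sup>*\<^sup>* t1 m1" "nf m1" "nf_rel R m0 m1"
      using sim[OF Rt relpowp_imp_rtranclp[OF h(2)] h(3)] by blast
    have fvm: "fv m0 \<subseteq> fv t0" "fv m1 \<subseteq> fv t1" using pow_fv[OF h(2)] star_fv[OF m1(1)] by auto
    have lcm: "lc m0" "lc m1" using pow_lc[OF h(2) lct(1)] star_lc[OF m1(1) lct(2)] by auto
    have gr': "grel (K - j1) g0 g1 (fv m0 \<union> fv m1)" using grel_mono[OF gr, of "K - j1" "fv m0 \<union> fv m1"] fvm by auto
    have "EV (K - j1) (msubst g0 m0) (msubst g1 m1)"
      using FT_nf[of "K - j1" m0 m1 g0 g1] FTi VRi m1(3) gr' lcm by simp
    moreover have "j - j1 \<le> K - j1" using h(1) jn(1) by simp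
    ultimately obtain n1 where n1: "rd\<^sup>*\<^sup>* (msubst g1 m1) n1" "nf n1" "L (K - j1 - (j - j1)) n n1"
      using h(4) jn(3) unfolding EV_def by blast
    have "K - j1 - (j - j1) = K - j" using h(1) jn(1) by simp
    moreover have "rd\<^sup>*\<^sup>* (msubst g1 t1) n1" using rtranclp_trans[OF star_subst[OF m1(1) gd(2)] n1(1)] .
    ultimately show "\<exists>n1. rd\<^sup>*\<^sup>* (msubst g1 t1) n1 \<and> nf n1 \<and> L (K - j) n n1" using n1 by auto
  qed
qed

lemma FTVR: "FT K \<and> VR K"
proof (induction K rule: less_induct)
  case (less K)
  have "VR K" using VR_step less by blast
  then have "\<forall>i\<le>K. VR i" using less by (metis le_neq_implies_less)
  then have "FT K" using FT_step less by blast
  then show ?case using \<open>VR K\<close> by blast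
qed

lemma fundamental: "R t0 t1 \<Longrightarrow> grel K g0 g1 (fv t0 \<union> fv t1) \<Longrightarrow> EV K (msubst g0 t0) (msubst g1 t1)"
  using FTVR unfolding FT_def by blast

end


definition OL :: "trm \<Rightarrow> trm \<Rightarrow> bool" where
  "OL t0 t1 \<longleftrightarrow> lc t0 \<and> lc t1 \<and>
     (\<forall>K g0 g1. grel K g0 g1 (fv t0 \<union> fv t1) \<longrightarrow> EV K (msubst g0 t0) (msubst g1 t1))"

lemma (in bisim) R_OL: "R t0 t1 \<Longrightarrow> OL t0 t1"
  unfolding OL_def using R_lc fundamental by blast

lemma OL_var: "OL (FV x) (FV x)"
  unfolding OL_def
proof (intro conjI allI impI)
  fix K g0 g1 assume gr: "grel K g0 g1 (fv (FV x) \<union> fv (FV x))"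
  have L: "L K (g0 x) (g1 x)" using gr unfolding grel_def by simp
  have "is_val (g0 x)" "is_val (g1 x)" using grel_good[OF gr] unfolding good_def by auto
  then show "EV K (msubst g0 (FV x)) (msubst g1 (FV x))"
    using EV_nf_intro[OF _ rtranclp.rtrancl_refl _ L] by simp
qed auto

lemma OL_app: "OL a0 a1 \<Longrightarrow> OL c0 c1 \<Longrightarrow> OL (App a0 c0) (App a1 c1)"
  unfolding OL_def
proof (intro conjI allI impI)
  fix K g0 g1
  assume a: "lc a0 \<and> lc a1 \<and> (\<forall>K g0 g1. grel K g0 g1 (fv a0 \<union> fv a1) \<longrightarrow> EV K (msubst g0 a0) (msubst g1 a1))"
    and c: "lc c0 \<and> lc c1 \<and> (\<forall>K g0 g1. grel K g0 g1 (fv c0 \<union> fv c1) \<longrightarrow> EV K (msubst g0 c0) (msubst g1 c1))"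
    and gr: "grel K g0 g1 (fv (App a0 c0) \<union> fv (App a1 c1))"
  have g1: "grel K g0 g1 (fv a0 \<union> fv a1)" "grel K g0 g1 (fv c0 \<union> fv c1)"
    using grel_mono[OF gr order.refl] by auto
  have "cl (msubst g0 c0)" "cl (msubst g1 c1)"
    using msubst_cl0[OF g1(2) _] msubst_cl1[OF g1(2) _] c by auto
  then show "EV K (msubst g0 (App a0 c0)) (msubst g1 (App a1 c1))"
    using EV_app_compat a c g1 by simp
qed (auto simp: OL_def)

lemma OL_reset: "OL t0 t1 \<Longrightarrow> OL (Reset t0) (Reset t1)"
proof -
  assume a: "OL t0 t1"
  show ?thesis unfolding OL_def
  proof (intro conjI allI impI)
    fix K g0 g1 assume "grel K g0 g1 (fv (Reset t0) \<union> fv (Reset t1))"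
    then have "grel K g0 g1 (fv t0 \<union> fv t1)" by simp
    then have "EV K (msubst g0 t0) (msubst g1 t1)" using a unfolding OL_def by blast
    then show "EV K (msubst g0 (Reset t0)) (msubst g1 (Reset t1))" using EV_reset by simp
  qed (use a in \<open>auto simp: OL_def\<close>)
qed

lemma lc_lam: "lc t \<Longrightarrow> lc (lam x t)"
  unfolding lam_def by (simp add: lc_close)

lemma lc_shift: "lc t \<Longrightarrow> lc (shift x t)"
  unfolding shift_def by (simp add: lc_close)

lemma Frel_Hole: "Frel i Hole Hole"
  unfolding Frel_def
proof (intro allI impI)
  fix v0 v1 assume a: "L i v0 v1" "is_val v0" "is_val v1"
  then show "EV i (plugE Hole v0) (plugE Hole v1)" using EV_nf_intro[OF _ rtranclp.rtrancl_refl _ a(1)] by simp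
qed

lemma grel_lc: "grel K g0 g1 X \<Longrightarrow> (\<forall>y. lc (g0 y)) \<and> (\<forall>y. lc (g1 y))"
  using grel_good unfolding good_def by blast

lemma OL_lam: "OL t0 t1 \<Longrightarrow> OL (lam x t0) (lam x t1)"
proof -
  assume ol: "OL t0 t1"
  have lct: "lc t0" "lc t1" using ol unfolding OL_def by auto
  show ?thesis unfolding OL_def
  proof (intro conjI allI impI)
    show "lc (lam x t0)" "lc (lam x t1)" using lct lc_lam by auto
  next
    fix K g0 g1 assume gr: "grel K g0 g1 (fv (lam x t0) \<union> fv (lam x t1))"
    define B0 where "B0 = msubst g0 (close_at 0 x t0)"
    define B1 where "B1 = msubst g1 (close_at 0 x t1)"
    have eq: "msubst g0 (lam x t0) = Lam B0" "msubst g1 (lam x t1) = Lam B1"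
      by (simp_all add: lam_def B0_def B1_def)
    have glc: "\<forall>y. lc (g0 y)" "\<forall>y. lc (g1 y)" using grel_lc[OF gr] by auto
    have cl: "cl (Lam B0)" "cl (Lam B1)"
      using msubst_cl0[OF gr _ lc_lam[OF lct(1)], of x] msubst_cl1[OF gr _ lc_lam[OF lct(2)], of x] eq by auto
    have "\<forall>i. i \<le> K \<longrightarrow> L i (Lam B0) (Lam B1)"
    proof (intro allI)
      fix i show "i \<le> K \<longrightarrow> L i (Lam B0) (Lam B1)"
      proof (induction i)
        case 0
        then show ?case using cl by (simp add: L.simps(1))
      next
        case (Suc i)
        show ?case
        proof
          assume si: "Suc i \<le> K"
          show "L (Suc i) (Lam B0) (Lam B1)" unfolding L_Suc
          proof (intro conjI allI impI)
            show "L i (Lam B0) (Lam B1)" using Suc si by simp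
          next
            fix b0 b1 u0 u1 assume a: "Lam B0 = Lam b0" "Lam B1 = Lam b1" "L i u0 u1" "is_val u0" "is_val u1"
            have cu: "cl u0" "cl u1" using L_cl[OF a(3)] by auto
            have "grel i g0 g1 (fv (lam x t0) \<union> fv (lam x t1))" using grel_mono[OF gr] si by simp
            then have "grel i (g0(x:=u0)) (g1(x:=u1)) (insert x (fv (lam x t0) \<union> fv (lam x t1)))"
              using grel_upd a(3-5) by blast
            moreover have "fv t0 \<union> fv t1 \<subseteq> insert x (fv (lam x t0) \<union> fv (lam x t1))"
              by (auto simp: lam_def fv_close)
            ultimately have "grel i (g0(x:=u0)) (g1(x:=u1)) (fv t0 \<union> fv t1)" using grel_mono by blast
            then have "EV i (msubst (g0(x:=u0)) t0) (msubst (g1(x:=u1)) t1)" using ol unfolding OL_def by blast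
            moreover have "opn B0 u0 = msubst (g0(x:=u0)) t0" "opn B1 u1 = msubst (g1(x:=u1)) t1"
              unfolding B0_def B1_def using open_msubst_close lct glc cu by (auto simp: cl_def)
            ultimately show "EV i (opn b0 u0) (opn b1 u1)" using a(1,2) by simp
          next
            fix F0 b0 F1 b1 assume "pure F0" "pure F1" "Lam B0 = plugE F0 (Shift b0)"
            then show "Frel i F0 F1" by simp
          next
            fix F0 b0 F1 b1 c0 c1 assume "pure F0" "pure F1" "Lam B0 = plugE F0 (Shift b0)"
            then show "EV i (Reset (opn b0 c0)) (Reset (opn b1 c1))" by simp
          qed
        qed
      qed
    qed
    then have "L K (Lam B0) (Lam B1)" by simp
    then show "EV K (msubst g0 (lam x t0)) (msubst g1 (lam x t1))"
      using EV_nf_intro[OF _ rtranclp.rtrancl_refl] eq by simp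
  qed
qed

lemma OL_shift: "OL t0 t1 \<Longrightarrow> OL (shift x t0) (shift x t1)"
proof -
  assume ol: "OL t0 t1"
  have lct: "lc t0" "lc t1" using ol unfolding OL_def by auto
  show ?thesis unfolding OL_def
  proof (intro conjI allI impI)
    show "lc (shift x t0)" "lc (shift x t1)" using lct lc_shift by auto
  next
    fix K g0 g1 assume gr: "grel K g0 g1 (fv (shift x t0) \<union> fv (shift x t1))"
    define B0 where "B0 = msubst g0 (close_at 0 x t0)"
    define B1 where "B1 = msubst g1 (close_at 0 x t1)"
    have eq: "msubst g0 (shift x t0) = plugE Hole (Shift B0)" "msubst g1 (shift x t1) = plugE Hole (Shift B1)"
      by (simp_all add: shift_def B0_def B1_def)
    have glc: "\<forall>y. lc (g0 y)" "\<forall>y. lc (g1 y)" using grel_lc[OF gr] by auto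
    have cl: "cl (plugE Hole (Shift B0))" "cl (plugE Hole (Shift B1))"
      using msubst_cl0[OF gr _ lc_shift[OF lct(1)], of x] msubst_cl1[OF gr _ lc_shift[OF lct(2)], of x] eq by auto
    have "\<forall>i. i \<le> K \<longrightarrow> L i (plugE Hole (Shift B0)) (plugE Hole (Shift B1))"
    proof (intro allI)
      fix i show "i \<le> K \<longrightarrow> L i (plugE Hole (Shift B0)) (plugE Hole (Shift B1))"
      proof (induction i)
        case 0
        have "\<exists>F0 b0 F1 b1. pure F0 \<and> pure F1 \<and> plugE Hole (Shift B0) = plugE F0 (Shift b0) \<and>
              plugE Hole (Shift B1) = plugE F1 (Shift b1)"
          by (rule exI[of _ Hole], rule exI[of _ B0], rule exI[of _ Hole], rule exI[of _ B1]) simp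
        then show ?case using cl by (simp add: L.simps(1))
      next
        case (Suc i)
        show ?case
        proof
          assume si: "Suc i \<le> K"
          show "L (Suc i) (plugE Hole (Shift B0)) (plugE Hole (Shift B1))" unfolding L_Suc
          proof (intro conjI allI impI)
            show "L i (plugE Hole (Shift B0)) (plugE Hole (Shift B1))" using Suc si by simp
          next
            fix b0 b1 u0 u1 assume "plugE Hole (Shift B0) = Lam b0"
            then show "EV i (opn b0 u0) (opn b1 u1)" by simp
          next
            fix F0 b0 F1 b1 assume a: "pure F0" "pure F1" "plugE Hole (Shift B0) = plugE F0 (Shift b0)"
              "plugE Hole (Shift B1) = plugE F1 (Shift b1)"
            have "F0 = Hole" "F1 = Hole" using plugF_inj[OF _ a(1) a(3)] plugF_inj[OF _ a(2) a(4)] by auto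
            then show "Frel i F0 F1" using Frel_Hole by simp
          next
            fix F0 b0 F1 b1 c0 c1 assume a: "pure F0" "pure F1" "plugE Hole (Shift B0) = plugE F0 (Shift b0)"
              "plugE Hole (Shift B1) = plugE F1 (Shift b1)" "L i c0 c1" "is_val c0" "is_val c1"
            have bb: "b0 = B0" "b1 = B1" using plugF_inj[OF _ a(1) a(3)] plugF_inj[OF _ a(2) a(4)] by auto
            have cu: "cl c0" "cl c1" using L_cl[OF a(5)] by auto
            have "grel i g0 g1 (fv (shift x t0) \<union> fv (shift x t1))" using grel_mono[OF gr] si by simp
            then have "grel i (g0(x:=c0)) (g1(x:=c1)) (insert x (fv (shift x t0) \<union> fv (shift x t1)))"
              using grel_upd a(5-7) by blast
            moreover have "fv t0 \<union> fv t1 \<subseteq> insert x (fv (shift x t0) \<union> fv (shift x t1))"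
              by (auto simp: shift_def fv_close)
            ultimately have "grel i (g0(x:=c0)) (g1(x:=c1)) (fv t0 \<union> fv t1)" using grel_mono by blast
            then have "EV i (msubst (g0(x:=c0)) t0) (msubst (g1(x:=c1)) t1)" using ol unfolding OL_def by blast
            moreover have "opn B0 c0 = msubst (g0(x:=c0)) t0" "opn B1 c1 = msubst (g1(x:=c1)) t1"
              unfolding B0_def B1_def using open_msubst_close lct glc cu by (auto simp: cl_def)
            ultimately show "EV i (Reset (opn b0 c0)) (Reset (opn b1 c1))" using bb EV_reset by simp
          qed
        qed
      qed
    qed
    then have L: "L K (plugE Hole (Shift B0)) (plugE Hole (Shift B1))" by simp
    have "nf (plugE Hole (Shift B0))" "nf (plugE Hole (Shift B1))" using ctrl_nored'[of Hole] by auto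
    then show "EV K (msubst g0 (shift x t0)) (msubst g1 (shift x t1))"
      using EV_nf_intro[OF _ rtranclp.rtrancl_refl _ L] eq by simp
  qed
qed


lemma Lam_as_lam: "y \<notin> fv b \<Longrightarrow> Lam b = lam y (opn b (FV y))"
  unfolding lam_def by (simp add: close_open)

lemma Shift_as_shift: "y \<notin> fv b \<Longrightarrow> Shift b = shift y (opn b (FV y))"
  unfolding shift_def by (simp add: close_open)

lemma OL_refl: "lc t \<Longrightarrow> OL t t"
proof (induction "size t" arbitrary: t rule: less_induct)
  case less
  show ?case
  proof (cases t)
    case (BV i)
    then show ?thesis using less by simp
  next
    case (FV x)
    then show ?thesis using OL_var by simp
  next
    case (Lam b)
    obtain y where y: "y \<notin> fv b" using finite_fv ex_new_if_finite infinite_UNIV_nat by blast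
    have "lc (opn b (FV y))" using less.prems Lam lc_open by simp
    moreover have "size (opn b (FV y)) < size t" using Lam by simp
    ultimately have "OL (opn b (FV y)) (opn b (FV y))" using less.hyps by blast
    then show ?thesis using OL_lam Lam Lam_as_lam[OF y] by simp
  next
    case (App a c)
    then show ?thesis using less OL_app by simp
  next
    case (Shift b)
    obtain y where y: "y \<notin> fv b" using finite_fv ex_new_if_finite infinite_UNIV_nat by blast
    have "lc (opn b (FV y))" using less.prems Shift lc_open by simp
    moreover have "size (opn b (FV y)) < size t" using Shift by simp
    ultimately have "OL (opn b (FV y)) (opn b (FV y))" using less.hyps by blast
    then show ?thesis using OL_shift Shift Shift_as_shift[OF y] by simp
  next
    case (Reset a)
    then show ?thesis using less OL_reset by simp
  qed
qed

lemma OL_ctx: "wf_ctx C \<Longrightarrow> OL t0 t1 \<Longrightarrow> OL (plugC C t0) (plugC C t1)"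
proof (induction C)
  case (CLam x C)
  then show ?case using OL_lam by simp
next
  case (CAppL C s)
  then show ?case using OL_app OL_refl by simp
next
  case (CAppR s C)
  then show ?case using OL_app OL_refl by simp
next
  case (CShift k C)
  then show ?case using OL_shift by simp
next
  case (CReset C)
  then show ?case using OL_reset by simp
qed simp

lemma grel_FV: "grel K FV FV {}"
  unfolding grel_def good_def by simp

lemma OL_obs:
  assumes ol: "OL s0 s1" and c: "fv s0 = {}" "fv s1 = {}"
  shows "((\<exists>v0. eval s0 v0 \<and> is_val v0) \<longrightarrow> (\<exists>v1. eval s1 v1 \<and> is_val v1)) \<and>
    ((\<exists>u0. eval s0 u0 \<and> control_stuck u0) \<longrightarrow> (\<exists>u1. eval s1 u1 \<and> control_stuck u1))"
proof -
  have key: "\<exists>n1. eval s1 n1 \<and> L 0 n0 n1" if e: "eval s0 n0" for n0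
  proof -
    have e': "rd\<^sup>*\<^sup>* s0 n0" "nf n0" using e eval_ev by auto
    obtain j where j: "(rd ^^ j) s0 n0" using rtranclp_imp_relpowp[OF e'(1)] by blast
    have "grel j FV FV (fv s0 \<union> fv s1)" using c grel_FV by simp
    then have "EV j s0 s1" using ol unfolding OL_def by (metis msubst_id)
    then obtain n1 where n1: "rd\<^sup>*\<^sup>* s1 n1" "nf n1" "L (j - j) n0 n1"
      using j e'(2) unfolding EV_def by blast
    have "eval s1 n1" using n1 eval_ev by blast
    moreover have "L 0 n0 n1" using n1(3) by simp
    ultimately show ?thesis by blast
  qed
  show ?thesis
  proof (intro conjI impI)
    assume "\<exists>v0. eval s0 v0 \<and> is_val v0"
    then obtain v0 where v0: "eval s0 v0" "is_val v0" by blast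
    obtain n1 where n1: "eval s1 n1" "L 0 v0 n1" using key[OF v0(1)] by blast
    from L_kind[OF n1(2)] have "is_val n1" using v0(2) by auto
    then show "\<exists>v1. eval s1 v1 \<and> is_val v1" using n1 by blast
  next
    assume "\<exists>u0. eval s0 u0 \<and> control_stuck u0"
    then obtain u0 where u0: "eval s0 u0" "control_stuck u0" by blast
    obtain n1 where n1: "eval s1 n1" "L 0 u0 n1" using key[OF u0(1)] by blast
    obtain F b where Fb: "pure F" "u0 = plugE F (Shift b)" using u0(2) unfolding control_stuck_def by blast
    from L_kind[OF n1(2)] have "control_stuck n1" using Fb unfolding control_stuck_def by auto
    then show "\<exists>u1. eval s1 u1 \<and> control_stuck u1" using n1 by blast
  qed
qed

lemma nf_bisim_conv: "nf_bisim R \<Longrightarrow> nf_bisim (\<lambda>a b. R b a)"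
  unfolding nf_bisim_def by auto

theorem theorem1:
  assumes "lc t0" and "lc t1" and "nf_bisimilar t0 t1"
  shows "ctx_equiv t0 t1"
proof -
  obtain R where R: "nf_bisim R" "R t0 t1" using assms(3) unfolding nf_bisimilar_def by blast
  interpret b0: bisim R using R(1) by unfold_locales
  interpret b1: bisim "\<lambda>a b. R b a" using nf_bisim_conv[OF R(1)] by unfold_locales
  have o0: "OL t0 t1" using b0.R_OL R(2) by blast
  have o1: "OL t1 t0" using b1.R_OL R(2) by blast
  show ?thesis unfolding ctx_equiv_def
  proof (intro allI impI)
    fix C assume C: "wf_ctx C \<and> fv (plugC C t0) = {} \<and> fv (plugC C t1) = {}"
    have "OL (plugC C t0) (plugC C t1)" "OL (plugC C t1) (plugC C t0)" using OL_ctx C o0 o1 by auto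
    then show "((\<exists>v0. eval (plugC C t0) v0 \<and> is_val v0) \<longrightarrow> (\<exists>v1. eval (plugC C t1) v1 \<and> is_val v1)) \<and>
      ((\<exists>u0. eval (plugC C t0) u0 \<and> control_stuck u0) \<longrightarrow> (\<exists>u1. eval (plugC C t1) u1 \<and> control_stuck u1)) \<and>
      ((\<exists>v1. eval (plugC C t1) v1 \<and> is_val v1) \<longrightarrow> (\<exists>v0. eval (plugC C t0) v0 \<and> is_val v0)) \<and>
      ((\<exists>u1. eval (plugC C t1) u1 \<and> control_stuck u1) \<longrightarrow> (\<exists>u0. eval (plugC C t0) u0 \<and> control_stuck u0))"
      using OL_obs C by blast
  qed
qed


end
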